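(* Let $n,d\in\mathbb{N}$ and $\alpha>0$. Let $M:(\{0,1\}^d)^n\to[0,1]^d$ be $(1,1/(10n))$-differentially private. Let $P^1,\dots,P^d$ be independent uniform draws from $[0,1]$ and let $X\in(\{0,1\}^d)^n$ have entries $X_i^j$ independent conditioned on $P$ with $\mathbb{E}[X_i^j\mid P]=P^j$. Assume $\mathbb{E}_{P,X,M}\big[\|M(X)-P\|_2^2\big]\le\alpha^2d$. If $\alpha\le1/18$, then $n\ge\sqrt d/5$.
   Context: A dataset $x\in(\{0,1\}^d)^n$ is an $n\times d$ matrix with rows $x_i$; two datasets are neighbors if they differ in at most one row. A randomized algorithm $M$ is $(\varepsilon,\delta)$-differentially private if for all neighboring $x,x'$ and all sets $R$ of outputs, $\Pr[M(x)\in R]\le e^\varepsilon\Pr[M(x')\in R]+\delta$. *)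

theory Defs
  imports "HOL-Probability.Probability"
begin

text \<open>Datasets in ({0,1}^d)^n: row i (i < n) is x i, entry j (j < d) is x i j.\<close>
definition datasets :: "nat \<Rightarrow> nat \<Rightarrow> (nat \<Rightarrow> nat \<Rightarrow> bool) set" where
  "datasets n d = ({..<n} \<rightarrow>\<^sub>E ({..<d} \<rightarrow>\<^sub>E (UNIV :: bool set)))"

definition neighbors :: "nat \<Rightarrow> (nat \<Rightarrow> nat \<Rightarrow> bool) \<Rightarrow> (nat \<Rightarrow> nat \<Rightarrow> bool) \<Rightarrow> bool" where
  "neighbors n x x' \<longleftrightarrow> card {i \<in> {..<n}. x i \<noteq> x' i} \<le> 1"

definition out_space :: "nat \<Rightarrow> (nat \<Rightarrow> real) measure" where
  "out_space d = PiM {..<d} (\<lambda>_. borel)"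

text \<open>A randomized algorithm from datasets to [0,1]^d: for each dataset a probability
  measure on R^d giving full mass to [0,1]^d.\<close>
definition mechanism :: "nat \<Rightarrow> nat \<Rightarrow> ((nat \<Rightarrow> nat \<Rightarrow> bool) \<Rightarrow> (nat \<Rightarrow> real) measure) \<Rightarrow> bool" where
  "mechanism n d M \<longleftrightarrow> (\<forall>x\<in>datasets n d. prob_space (M x) \<and> sets (M x) = sets (out_space d)
      \<and> emeasure (M x) ({..<d} \<rightarrow>\<^sub>E {0..1}) = 1)"

definition diff_private :: "nat \<Rightarrow> nat \<Rightarrow> real \<Rightarrow> real \<Rightarrow>
    ((nat \<Rightarrow> nat \<Rightarrow> bool) \<Rightarrow> (nat \<Rightarrow> real) measure) \<Rightarrow> bool" where
  "diff_private n d \<epsilon> \<delta> M \<longleftrightarrow>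
     (\<forall>x\<in>datasets n d. \<forall>x'\<in>datasets n d. neighbors n x x' \<longrightarrow>
        (\<forall>R\<in>sets (out_space d). measure (M x) R \<le> exp \<epsilon> * measure (M x') R + \<delta>))"

definition prior :: "nat \<Rightarrow> (nat \<Rightarrow> real) measure" where
  "prior d = PiM {..<d} (\<lambda>_. uniform_measure lborel {0..1})"

text \<open>Conditional probability of dataset x given P = p (entries independent Bernoulli(p j)).\<close>
definition data_prob :: "nat \<Rightarrow> nat \<Rightarrow> (nat \<Rightarrow> real) \<Rightarrow> (nat \<Rightarrow> nat \<Rightarrow> bool) \<Rightarrow> real" where
  "data_prob n d p x = (\<Prod>i<n. \<Prod>j<d. if x i j then p j else 1 - p j)"

definition expected_sq_error :: "nat \<Rightarrow> nat \<Rightarrow> ((nat \<Rightarrow> nat \<Rightarrow> bool) \<Rightarrow> (nat \<Rightarrow> real) measure) \<Rightarrow> ennreal" where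
  "expected_sq_error n d M =
     (\<integral>\<^sup>+ p. (\<Sum>x\<in>datasets n d. ennreal (data_prob n d p x) *
        (\<integral>\<^sup>+ y. ennreal (\<Sum>j<d. (y j - p j)\<^sup>2) \<partial>M x)) \<partial>prior d)"

end

theory Submission
  imports Defs
begin
abbreviation "U \<equiv> uniform_measure lborel {0..1::real}"

lemma U_eq: "U = density lborel (\<lambda>x. ennreal (indicator {0..1::real} x))"
  unfolding uniform_measure_def
  by (simp add: ennreal_indicator) (rule arg_cong[of _ _ "density lborel"], simp add: fun_eq_iff divide_ennreal_def)

lemma U_prob: "prob_space U"
  by (rule prob_space_uniform_measure) auto

lemma U_integral:
  fixes f :: "real \<Rightarrow> real"
  assumes "continuous_on UNIV f"
  shows "integrable U f" "integral\<^sup>L U f = (\<integral>x. f x * indicator {0..1} x \<partial>lborel)"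
proof -
  have si: "set_integrable lborel {0..1} f"
    by (rule borel_integrable_atLeastAtMost') (rule continuous_on_subset[OF assms], simp)
  have fm: "f \<in> borel_measurable lborel"
    using assms by (simp add: borel_measurable_continuous_onI)
  show "integrable U f" unfolding U_eq
    apply (subst integrable_density)
    using si fm by (auto simp: set_integrable_def)
  show "integral\<^sup>L U f = (\<integral>x. f x * indicator {0..1} x \<partial>lborel)"
    unfolding U_eq 
    apply (subst integral_density) using fm by (auto simp: mult.commute)
qed

lemma U_poly_zero:
  fixes a b :: nat
  shows "integral\<^sup>L U (\<lambda>t. t^a * (1-t)^b * (real a + 1 - (real a + real b + 2) * t)) = 0"
proof -
  have c: "continuous_on UNIV (\<lambda>t::real. t^a * (1-t)^b * (real a + 1 - (real a + real b + 2) * t))"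
    by (intro continuous_intros)
  have d: "((\<lambda>t. t^Suc a * (1-t)^Suc b) has_real_derivative
      (t^a * (1-t)^b * (real a + 1 - (real a + real b + 2) * t))) (at t)" for t :: real
  proof -
    have h1: "((\<lambda>t::real. 1 - t) has_real_derivative -1) (at t)" by (auto intro!: derivative_eq_intros)
    have "((\<lambda>t. t^Suc a * (1-t)^Suc b) has_real_derivative
      ((1 + of_nat a) * (1 * t ^ a)) * (1-t)^Suc b + ((1 + of_nat b) * ((-1) * (1-t) ^ b)) * t^Suc a) (at t)"
      by (intro DERIV_mult DERIV_power_Suc derivative_intros h1)
    moreover have "((1 + of_nat a) * (1 * t ^ a)) * (1-t)^Suc b + ((1 + of_nat b) * ((-1) * (1-t) ^ b)) * t^Suc a
       = t^a * (1-t)^b * (real a + 1 - (real a + real b + 2) * t)"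
      by (simp add: algebra_simps)
    ultimately show ?thesis by simp
  qed
  have "(\<integral>t. t^a * (1-t)^b * (real a + 1 - (real a + real b + 2) * t) * indicator {0..1} t \<partial>lborel) = 
        1^Suc a * (1-1)^Suc b - 0^Suc a * (1-0)^Suc b"
    by (rule integral_FTC_Icc_real[OF _ d]) (auto intro!: continuous_intros)
  then show ?thesis using U_integral(2)[OF c] by simp
qed

lemma U_int_sq: "integral\<^sup>L U (\<lambda>t. t * (2*t - 1)) = 1/6"
proof -
  have c: "continuous_on UNIV (\<lambda>t::real. t * (2*t - 1))" by (intro continuous_intros)
  have d: "((\<lambda>t. 2/3*t^3 - t^2/2) has_real_derivative (t * (2*t - 1))) (at t)" for t :: real
    by (auto intro!: derivative_eq_intros simp: algebra_simps power2_eq_square)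
  have "(\<integral>t. t * (2*t - 1) * indicator {0..1} t \<partial>lborel) = (2/3*1^3 - 1^2/2) - (2/3*0^3 - 0^2/(2::real))"
    by (rule integral_FTC_Icc_real[OF _ d]) (auto intro!: continuous_intros)
  then show ?thesis using U_integral(2)[OF c] by simp
qed

lemma PP: "product_prob_space (\<lambda>_::nat. U)"
  by (intro product_prob_space.intro product_sigma_finite.intro product_prob_space_axioms.intro
      prob_space_imp_sigma_finite U_prob)

lemma prior_prob: "prob_space (prior d)"
  unfolding prior_def by (rule prob_space_PiM) (rule U_prob)

lemma prior_AE: "AE p in prior d. \<forall>j<d. 0 \<le> p j \<and> p j \<le> 1"
proof -
  interpret product_prob_space "\<lambda>_::nat. U" "{..<d}" by (rule PP)
  have "\<forall>j\<in>{..<d}. AE p in prior d. 0 \<le> p j \<and> p j \<le> 1"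
  proof
    fix j assume j: "j \<in> {..<d}"
    have "AE t in U. 0 \<le> t \<and> t \<le> 1" by (rule AE_uniform_measureI) auto
    then show "AE p in prior d. 0 \<le> p j \<and> p j \<le> 1" unfolding prior_def
      by (rule AE_component[OF j])
  qed
  then have "AE p in prior d. \<forall>j\<in>{..<d}. 0 \<le> p j \<and> p j \<le> 1"
    by (subst eventually_ball_finite_distrib) auto
  then show ?thesis by auto
qed

lemma prior_prod:
  fixes f :: "nat \<Rightarrow> real \<Rightarrow> real"
  assumes "\<And>k. k < d \<Longrightarrow> continuous_on UNIV (f k)"
  shows "(\<integral>p. (\<Prod>k<d. f k (p k)) \<partial>prior d) = (\<Prod>k<d. integral\<^sup>L U (f k))"
proof -
  interpret product_prob_space "\<lambda>_::nat. U" "{..<d}" by (rule PP)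
  show ?thesis unfolding prior_def
    by (rule product_integral_prod) (auto intro: U_integral(1) assms)
qed

lemma prior_coord: 
  assumes "j < d"
  shows "(\<integral>p. p j * (2 * p j - 1) \<partial>prior d) = 1/6"
proof -
  have "(\<integral>p. p j * (2 * p j - 1) \<partial>prior d) = 
        (\<integral>p. (\<Prod>k<d. (\<lambda>k t. if k = j then t * (2*t - 1) else 1) k (p k)) \<partial>prior d)"
    using assms by (simp add: prod.If_cases Int_def)
  also have "\<dots> = (\<Prod>k<d. integral\<^sup>L U ((\<lambda>k t. if k = j then t * (2*t - 1) else 1) k))"
    apply (rule prior_prod) subgoal for k by (cases "k = j") (auto intro!: continuous_intros) done
  also have "\<dots> = (\<Prod>k<d. if k = j then 1/6 else 1)"
    using U_prob by (intro prod.cong) (auto simp: U_int_sq prob_space.prob_space)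
  also have "\<dots> = 1/6" using assms by simp
  finally show ?thesis .
qed

definition cnt :: "nat \<Rightarrow> (nat \<Rightarrow> nat \<Rightarrow> bool) \<Rightarrow> nat \<Rightarrow> nat" where
  "cnt n x k = card {i\<in>{..<n}. x i k}"

lemma prod_if_pow:
  fixes t s :: real
  shows "(\<Prod>i<n. if P i then t else s) = t ^ card {i\<in>{..<n}. P i} * s ^ (n - card {i\<in>{..<n}. P i})"
proof -
  have "(\<Prod>i<n. if P i then t else s) = t ^ card ({..<n} \<inter> {i. P i}) * s ^ card ({..<n} \<inter> - {i. P i})"
    by (simp add: prod.If_cases)
  moreover have "card ({..<n} \<inter> - {i. P i}) = n - card {i\<in>{..<n}. P i}"
  proof -
    have "{..<n} \<inter> - {i. P i} = {..<n} - {i\<in>{..<n}. P i}" by auto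
    moreover have "card ({..<n} - {i\<in>{..<n}. P i}) = n - card {i\<in>{..<n}. P i}"
      by (subst card_Diff_subset) auto
    ultimately show ?thesis by simp
  qed
  moreover have "{..<n} \<inter> {i. P i} = {i\<in>{..<n}. P i}" by auto
  ultimately show ?thesis by simp
qed

lemma data_prob_pow:
  "data_prob n d p x = (\<Prod>k<d. p k ^ cnt n x k * (1 - p k) ^ (n - cnt n x k))"
  unfolding data_prob_def cnt_def
  by (subst prod.swap) (simp add: prod_if_pow)

lemma cnt_le: "cnt n x k \<le> n"
  unfolding cnt_def by (rule order.trans[OF card_mono[of "{..<n}"]]) auto

lemma fingerprint_identity:
  assumes "j < d"
  shows "(\<integral>p. data_prob n d p x * (real (cnt n x j) + 1 - (real n + 2) * p j) \<partial>prior d) = 0"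
proof -
  define f where "f = (\<lambda>k t. t ^ cnt n x k * (1 - t) ^ (n - cnt n x k) *
        (if k = j then real (cnt n x j) + 1 - (real n + 2) * t else (1::real)))"
  have "(\<integral>p. data_prob n d p x * (real (cnt n x j) + 1 - (real n + 2) * p j) \<partial>prior d) = 
        (\<integral>p. (\<Prod>k<d. f k (p k)) \<partial>prior d)"
  proof (rule Bochner_Integration.integral_cong[OF refl])
    fix p :: "nat \<Rightarrow> real"
    have "(\<Prod>k<d. f k (p k)) = (\<Prod>k<d. p k ^ cnt n x k * (1 - p k) ^ (n - cnt n x k)) *
       (\<Prod>k<d. if k = j then real (cnt n x j) + 1 - (real n + 2) * p k else 1)"
      unfolding f_def by (simp add: prod.distrib)
    also have "(\<Prod>k<d. if k = j then real (cnt n x j) + 1 - (real n + 2) * p k else 1) =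
       real (cnt n x j) + 1 - (real n + 2) * p j" using assms by simp
    finally show "data_prob n d p x * (real (cnt n x j) + 1 - (real n + 2) * p j) = (\<Prod>k<d. f k (p k))"
      by (simp add: data_prob_pow)
  qed
  also have "\<dots> = (\<Prod>k<d. integral\<^sup>L U (f k))"
    apply (rule prior_prod) subgoal for k by (cases "k = j") (auto simp: f_def intro!: continuous_intros) done
  also have "\<dots> = 0"
  proof -
    have "integral\<^sup>L U (f j) = 0"
    proof -
      have e: "real (cnt n x j) + real (n - cnt n x j) + 2 = real n + 2"
        using cnt_le[of n x j] by simp
      have "integral\<^sup>L U (f j) = integral\<^sup>L U (\<lambda>t. t ^ cnt n x j * (1 - t) ^ (n - cnt n x j) *
          (real (cnt n x j) + 1 - (real (cnt n x j) + real (n - cnt n x j) + 2) * t))"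
        unfolding f_def e by simp
      also have "\<dots> = 0" by (rule U_poly_zero)
      finally show ?thesis .
    qed
    then show ?thesis using assms by (intro prod_zero) auto
  qed
  finally show ?thesis .
qed

definition drows :: "nat \<Rightarrow> (nat \<Rightarrow> bool) set" where
  "drows d = ({..<d} \<rightarrow>\<^sub>E (UNIV :: bool set))"

definition rho :: "nat \<Rightarrow> (nat \<Rightarrow> real) \<Rightarrow> (nat \<Rightarrow> bool) \<Rightarrow> real" where
  "rho d p r = (\<Prod>k<d. if r k then p k else 1 - p k)"

definition bv :: "bool \<Rightarrow> real" where "bv b = (if b then 1 else 0)"

lemma finite_rows: "finite (drows d)"
  unfolding drows_def by (auto intro!: finite_PiE)

lemma datasets_rows: "datasets n d = {..<n} \<rightarrow>\<^sub>E drows d"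
  unfolding datasets_def drows_def ..

lemma finite_datasets: "finite (datasets n d)"
  unfolding datasets_rows by (auto intro!: finite_PiE finite_rows)

lemma data_prob_rho: "data_prob n d p x = (\<Prod>i<n. rho d p (x i))"
  unfolding data_prob_def rho_def ..

lemma rho_nonneg: "(\<And>j. j < d \<Longrightarrow> 0 \<le> p j \<and> p j \<le> 1) \<Longrightarrow> 0 \<le> rho d p r"
  unfolding rho_def by (intro prod_nonneg) auto

lemma data_prob_nonneg: "(\<And>j. j < d \<Longrightarrow> 0 \<le> p j \<and> p j \<le> 1) \<Longrightarrow> 0 \<le> data_prob n d p x"
  unfolding data_prob_rho by (intro prod_nonneg rho_nonneg) auto

lemma sum_rows_prod:
  fixes \<phi> :: "nat \<Rightarrow> bool \<Rightarrow> real"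
  shows "(\<Sum>r\<in>drows d. \<Prod>k<d. \<phi> k (r k)) = (\<Prod>k<d. \<phi> k True + \<phi> k False)"
proof -
  have "(\<Prod>k<d. \<Sum>y\<in>(UNIV::bool set). \<phi> k y) = (\<Sum>r\<in>drows d. \<Prod>k<d. \<phi> k (r k))"
    unfolding drows_def by (rule prod_sum_PiE) auto
  moreover have "(\<Sum>y\<in>(UNIV::bool set). \<phi> k y) = \<phi> k True + \<phi> k False" for k
    by (simp add: UNIV_bool)
  ultimately show ?thesis by simp
qed

lemma rho_gen:
  fixes g :: "nat \<Rightarrow> bool \<Rightarrow> real"
  shows "(\<Sum>r\<in>drows d. rho d p r * (\<Prod>k<d. g k (r k))) = (\<Prod>k<d. p k * g k True + (1 - p k) * g k False)"
proof -
  have "(\<Sum>r\<in>drows d. rho d p r * (\<Prod>k<d. g k (r k))) = 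
        (\<Sum>r\<in>drows d. \<Prod>k<d. (\<lambda>k v. (if v then p k else 1 - p k) * g k v) k (r k))"
    unfolding rho_def by (simp add: prod.distrib)
  also have "\<dots> = (\<Prod>k<d. p k * g k True + (1 - p k) * g k False)"
    by (subst sum_rows_prod) simp
  finally show ?thesis .
qed

lemma rho_single:
  assumes "j < d"
  shows "(\<Sum>r\<in>drows d. rho d p r * G (r j)) = p j * G True + (1 - p j) * G False"
proof -
  have "(\<Sum>r\<in>drows d. rho d p r * G (r j)) = 
     (\<Sum>r\<in>drows d. rho d p r * (\<Prod>k<d. (\<lambda>k v. if k = j then G v else 1) k (r k)))"
    using assms by simp
  also have "\<dots> = (\<Prod>k<d. if k = j then p j * G True + (1 - p j) * G False else 1)"
    by (subst rho_gen) (intro prod.cong, auto)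
  also have "\<dots> = p j * G True + (1 - p j) * G False" using assms by simp
  finally show ?thesis .
qed

lemma rho_double:
  assumes "j < d" "l < d" "j \<noteq> l"
  shows "(\<Sum>r\<in>drows d. rho d p r * (G (r j) * H (r l))) = 
    (p j * G True + (1 - p j) * G False) * (p l * H True + (1 - p l) * H False)"
proof -
  have e: "G (r j) * H (r l) = (\<Prod>k<d. (\<lambda>k v. if k = j then G v else if k = l then H v else 1) k (r k))" for r
  proof -
    have "(\<Prod>k<d. (\<lambda>k v. if k = j then G v else if k = l then H v else 1) k (r k)) =
      (\<Prod>k<d. (if k = j then G (r j) else 1) * (if k = l then H (r l) else 1))"
      using assms by (intro prod.cong) auto
    also have "\<dots> = G (r j) * H (r l)" using assms by (simp add: prod.distrib)
    finally show ?thesis by simp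
  qed
  have "(\<Sum>r\<in>drows d. rho d p r * (G (r j) * H (r l))) =
    (\<Prod>k<d. (if k = j then p j * G True + (1 - p j) * G False else 1) *
       (if k = l then p l * H True + (1 - p l) * H False else 1))"
    unfolding e using assms by (subst rho_gen) (intro prod.cong, auto)
  also have "\<dots> = (p j * G True + (1 - p j) * G False) * (p l * H True + (1 - p l) * H False)"
    using assms by (simp add: prod.distrib)
  finally show ?thesis .
qed

lemma rho_sum1: "(\<Sum>r\<in>drows d. rho d p r) = 1"
  using rho_gen[of d p "\<lambda>_ _. 1"] by simp

lemma rho_centered:
  assumes "j < d"
  shows "(\<Sum>r\<in>drows d. rho d p r * (bv (r j) - p j)) = 0"
  using rho_single[OF assms, of p "\<lambda>v. bv v - p j"] by (simp add: bv_def algebra_simps)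

lemma rho_abs:
  assumes "j < d" "0 \<le> p j" "p j \<le> 1"
  shows "(\<Sum>r\<in>drows d. rho d p r * \<bar>bv (r j) - p j\<bar>) = 2 * p j * (1 - p j)"
  using rho_single[OF assms(1), of p "\<lambda>v. \<bar>bv v - p j\<bar>"] assms(2,3) by (simp add: bv_def algebra_simps)

lemma rho_quad:
  fixes u :: "nat \<Rightarrow> real"
  shows "(\<Sum>r\<in>drows d. rho d p r * (\<Sum>j<d. u j * (bv (r j) - p j))\<^sup>2) = (\<Sum>j<d. (u j)\<^sup>2 * (p j * (1 - p j)))"
proof -
  have "(\<Sum>r\<in>drows d. rho d p r * (\<Sum>j<d. u j * (bv (r j) - p j))\<^sup>2) =
    (\<Sum>r\<in>drows d. \<Sum>j<d. \<Sum>l<d. u j * u l * (rho d p r * ((bv (r j) - p j) * (bv (r l) - p l))))"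
    by (intro sum.cong refl) (simp add: power2_eq_square sum_product sum_distrib_left algebra_simps)
  also have "\<dots> = (\<Sum>j<d. \<Sum>l<d. u j * u l * (\<Sum>r\<in>drows d. rho d p r * ((bv (r j) - p j) * (bv (r l) - p l))))"
    by (simp add: sum_distrib_left sum.swap[of _ "drows d"])
  also have "\<dots> = (\<Sum>j<d. \<Sum>l<d. if l = j then (u j)\<^sup>2 * (p j * (1 - p j)) else 0)"
  proof (intro sum.cong refl)
    fix j l assume j: "j \<in> {..<d}" and l: "l \<in> {..<d}"
    show "u j * u l * (\<Sum>r\<in>drows d. rho d p r * ((bv (r j) - p j) * (bv (r l) - p l))) =
         (if l = j then (u j)\<^sup>2 * (p j * (1 - p j)) else 0)"
    proof (cases "l = j")
      case True
      have j': "j < d" using j by simp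
      have h: "(\<Sum>r\<in>drows d. rho d p r * ((bv (r j) - p j) * (bv (r j) - p j))) = p j * (1 - p j)"
        by (rule trans[OF rho_single[OF j', of p "\<lambda>v. (bv v - p j) * (bv v - p j)"]])
          (simp add: bv_def algebra_simps)
      show ?thesis unfolding True h by (simp add: power2_eq_square)
    next
      case False
      then show ?thesis using rho_double[of j d l p "\<lambda>v. bv v - p j" "\<lambda>v. bv v - p l"] j l
        by (simp add: bv_def algebra_simps)
    qed
  qed
  also have "\<dots> = (\<Sum>j<d. (u j)\<^sup>2 * (p j * (1 - p j)))"
    by (simp add: sum.delta)
  finally show ?thesis .
qed

lemma data_marg:
  assumes "i < n"
  shows "(\<Sum>x\<in>datasets n d. data_prob n d p x * G (x i)) = (\<Sum>r\<in>drows d. rho d p r * G r)"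
proof -
  have "(\<Prod>i'<n. \<Sum>r\<in>drows d. rho d p r * (if i' = i then G r else 1)) =
     (\<Sum>x\<in>datasets n d. \<Prod>i'<n. rho d p (x i') * (if i' = i then G (x i') else 1))"
    unfolding datasets_rows by (rule prod_sum_PiE) (auto simp: finite_rows)
  moreover have "(\<Prod>i'<n. \<Sum>r\<in>drows d. rho d p r * (if i' = i then G r else 1)) =
       (\<Prod>i'<n. if i' = i then (\<Sum>r\<in>drows d. rho d p r * G r) else 1)"
    by (intro prod.cong refl) (auto simp: rho_sum1)
  moreover have "(\<Prod>i'<n. rho d p (x i') * (if i' = i then G (x i') else 1)) = data_prob n d p x * G (x i)" for x
    using assms by (simp add: data_prob_rho prod.distrib)
  ultimately show ?thesis using assms by simp
qed

lemma data_sum1: "(\<Sum>x\<in>datasets n d. data_prob n d p x) = 1"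
proof (cases "n = 0")
  case True
  then show ?thesis by (simp add: datasets_def data_prob_def)
next
  case False
  then show ?thesis using data_marg[of 0 n d p "\<lambda>_. 1"] by (simp add: rho_sum1)
qed

lemma upd_in: "x \<in> datasets n d \<Longrightarrow> i < n \<Longrightarrow> r \<in> drows d \<Longrightarrow> x(i := r) \<in> datasets n d"
  unfolding datasets_rows by (auto simp: PiE_iff extensional_def)

lemma data_prob_upd:
  assumes "x \<in> datasets n d" "i < n"
  shows "data_prob n d p (x(i := r)) * rho d p (x i) = data_prob n d p x * rho d p r"
proof -
  have "data_prob n d p (x(i := r)) = rho d p r * (\<Prod>i'\<in>{..<n} - {i}. rho d p (x i'))"
    unfolding data_prob_rho using assms by (subst prod.remove[of _ i]) auto
  moreover have "data_prob n d p x = rho d p (x i) * (\<Prod>i'\<in>{..<n} - {i}. rho d p (x i'))"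
    unfolding data_prob_rho using assms by (subst prod.remove[of _ i]) auto
  ultimately show ?thesis by simp
qed

lemma swap_sum:
  assumes "i < n"
  shows "(\<Sum>x\<in>datasets n d. \<Sum>r\<in>drows d. data_prob n d p x * rho d p r * F (x i) (x(i := r))) =
         (\<Sum>x\<in>datasets n d. \<Sum>r\<in>drows d. data_prob n d p x * rho d p r * F r x)"
proof -
  let ?D = "datasets n d \<times> drows d"
  define \<phi> where "\<phi> = (\<lambda>(x::nat\<Rightarrow>nat\<Rightarrow>bool, r::nat\<Rightarrow>bool). (x(i := r), x i))"
  have inD: "x i \<in> drows d" if "x \<in> datasets n d" for x
    using that assms unfolding datasets_rows by auto
  have "(\<Sum>(x,r)\<in>?D. data_prob n d p x * rho d p r * F (x i) (x(i := r))) =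
        (\<Sum>(x,r)\<in>?D. data_prob n d p x * rho d p r * F r x)"
  proof (rule sum.reindex_bij_witness[of _ \<phi> \<phi>])
    fix a assume "a \<in> ?D"
    then show "\<phi> (\<phi> a) = a" "\<phi> a \<in> ?D"
      using assms inD by (auto simp: \<phi>_def upd_in split: prod.splits)
  next
    fix a assume "a \<in> ?D"
    then show "\<phi> (\<phi> a) = a" "\<phi> a \<in> ?D"
      using assms inD by (auto simp: \<phi>_def upd_in split: prod.splits)
  next
    fix a assume a: "a \<in> ?D"
    obtain x r where xr: "a = (x, r)" by (cases a)
    have x: "x \<in> datasets n d" and r: "r \<in> drows d" using a xr by auto
    show "(case \<phi> a of (x, r) \<Rightarrow> data_prob n d p x * rho d p r * F r x) =
          (case a of (x, r) \<Rightarrow> data_prob n d p x * rho d p r * F (x i) (x(i := r)))"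
      using data_prob_upd[OF x assms, of p r] by (simp add: xr \<phi>_def)
  qed
  then show ?thesis by (simp add: sum.cartesian_product)
qed

lemma neighbors_upd:
  assumes "i < n"
  shows "neighbors n x (x(i := r))" "neighbors n (x(i := r)) x"
proof -
  have "{i' \<in> {..<n}. x i' \<noteq> (x(i := r)) i'} \<subseteq> {i}" "{i' \<in> {..<n}. (x(i := r)) i' \<noteq> x i'} \<subseteq> {i}" by auto
  then show "neighbors n x (x(i := r))" "neighbors n (x(i := r)) x"
    unfolding neighbors_def by (auto dest!: card_mono[rotated] simp del: fun_upd_apply)
qed

lemma layer_cake_bdd:
  fixes g :: "'a \<Rightarrow> real"
  assumes "prob_space \<mu>" and g: "g \<in> borel_measurable \<mu>" and nn: "\<And>y. 0 \<le> g y" and bd: "\<And>y. g y \<le> B"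
  shows "(\<integral>\<^sup>+ y. ennreal (g y) \<partial>\<mu>) =
         (\<integral>\<^sup>+ t. indicator {0..B} t * emeasure \<mu> {y \<in> space \<mu>. t < g y} \<partial>lborel)"
proof -
  interpret prob_space \<mu> by fact
  interpret P: pair_sigma_finite \<mu> lborel ..
  define F where "F = (\<lambda>y t::real. (if 0 \<le> t \<and> t \<le> B \<and> t < g y then 1 else 0 :: ennreal))"
  have Fm: "case_prod F \<in> borel_measurable (\<mu> \<Otimes>\<^sub>M lborel)"
    unfolding F_def using g by measurable
  have 1: "(\<integral>\<^sup>+ t. F y t \<partial>lborel) = ennreal (g y)" for y
  proof -
    have "(\<integral>\<^sup>+ t. F y t \<partial>lborel) = (\<integral>\<^sup>+ t. indicator {0..<g y} t \<partial>lborel)"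
      using bd[of y] by (intro nn_integral_cong) (auto simp: F_def indicator_def)
    also have "\<dots> = ennreal (g y)" using nn[of y] by simp
    finally show ?thesis .
  qed
  have 2: "(\<integral>\<^sup>+ y. F y t \<partial>\<mu>) = indicator {0..B} t * emeasure \<mu> {y \<in> space \<mu>. t < g y}" for t
  proof -
    have "(\<integral>\<^sup>+ y. F y t \<partial>\<mu>) = (\<integral>\<^sup>+ y. indicator {0..B} t * indicator {y \<in> space \<mu>. t < g y} y \<partial>\<mu>)"
      by (intro nn_integral_cong) (auto simp: F_def indicator_def)
    also have "\<dots> = indicator {0..B} t * emeasure \<mu> {y \<in> space \<mu>. t < g y}"
      using g by (subst nn_integral_cmult_indicator) auto
    finally show ?thesis .
  qed
  have "(\<integral>\<^sup>+ y. ennreal (g y) \<partial>\<mu>) = (\<integral>\<^sup>+ y. (\<integral>\<^sup>+ t. F y t \<partial>lborel) \<partial>\<mu>)"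
    by (simp add: 1)
  also have "\<dots> = (\<integral>\<^sup>+ t. (\<integral>\<^sup>+ y. F y t \<partial>\<mu>) \<partial>lborel)"
    by (rule P.Fubini'[symmetric, OF Fm])
  also have "\<dots> = (\<integral>\<^sup>+ t. indicator {0..B} t * emeasure \<mu> {y \<in> space \<mu>. t < g y} \<partial>lborel)"
    by (simp add: 2)
  finally show ?thesis .
qed

lemma emeas_meas:
  fixes g :: "'a \<Rightarrow> real"
  assumes "prob_space \<nu>" and g: "g \<in> borel_measurable \<nu>"
  shows "(\<lambda>t. emeasure \<nu> {y \<in> space \<nu>. t < g y}) \<in> borel_measurable borel"
proof -
  interpret prob_space \<nu> by fact
  have Q: "{x \<in> space (lborel \<Otimes>\<^sub>M \<nu>). fst x < g (snd x)} \<in> sets (lborel \<Otimes>\<^sub>M \<nu>)"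
    using g by measurable
  have "(\<lambda>t. emeasure \<nu> (Pair t -` {x \<in> space (lborel \<Otimes>\<^sub>M \<nu>). fst x < g (snd x)})) \<in> borel_measurable lborel"
    by (rule measurable_emeasure_Pair[OF Q])
  moreover have "Pair t -` {x \<in> space (lborel \<Otimes>\<^sub>M \<nu>). fst x < g (snd x)} = {y \<in> space \<nu>. t < g y}" for t
    by (auto simp: space_pair_measure)
  ultimately show ?thesis by simp
qed

lemma dp_fun:
  fixes g :: "'a \<Rightarrow> real"
  assumes pm: "prob_space \<mu>" and pn: "prob_space \<nu>" and sm: "sets \<mu> = sets S" and sn: "sets \<nu> = sets S"
    and dp: "\<And>R. R \<in> sets S \<Longrightarrow> measure \<mu> R \<le> c * measure \<nu> R + \<delta>"
    and c: "0 \<le> c" and \<delta>: "0 \<le> \<delta>"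
    and g: "g \<in> borel_measurable S" and nn: "\<And>y. 0 \<le> g y" and bd: "\<And>y. g y \<le> B"
  shows "integral\<^sup>L \<mu> g \<le> c * integral\<^sup>L \<nu> g + \<delta> * B"
proof -
  interpret m: prob_space \<mu> by fact
  interpret n: prob_space \<nu> by fact
  have gm: "g \<in> borel_measurable \<mu>" using g by (subst measurable_cong_sets[OF sm refl])
  have gn: "g \<in> borel_measurable \<nu>" using g by (subst measurable_cong_sets[OF sn refl])
  have B: "0 \<le> B" using nn[of undefined] bd[of undefined] by simp
  have im: "integrable \<mu> g" using gm nn bd by (intro m.integrable_const_bound[where B=B]) auto
  have inu: "integrable \<nu> g" using gn nn bd by (intro n.integrable_const_bound[where B=B]) auto
  have sp: "space \<mu> = space \<nu>" using sm sn sets_eq_imp_space_eq by metis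
  have set_in: "{y \<in> space \<nu>. t < g y} \<in> sets S" for t
  proof -
    have "{y \<in> space \<nu>. t < g y} \<in> sets \<nu>" using gn by measurable
    then show ?thesis using sn by simp
  qed
  have ineq: "emeasure \<mu> {y \<in> space \<mu>. t < g y} \<le> ennreal c * emeasure \<nu> {y \<in> space \<nu>. t < g y} + ennreal \<delta>" for t
  proof -
    have "emeasure \<mu> {y \<in> space \<mu>. t < g y} = ennreal (measure \<mu> {y \<in> space \<nu>. t < g y})"
      by (simp add: m.emeasure_eq_measure sp)
    also have "\<dots> \<le> ennreal (c * measure \<nu> {y \<in> space \<nu>. t < g y} + \<delta>)"
      using dp[OF set_in] by (rule ennreal_leI)
    also have "\<dots> = ennreal c * emeasure \<nu> {y \<in> space \<nu>. t < g y} + ennreal \<delta>"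
      using c \<delta> by (simp add: n.emeasure_eq_measure ennreal_plus ennreal_mult)
    finally show ?thesis .
  qed
  have "ennreal (integral\<^sup>L \<mu> g) = (\<integral>\<^sup>+ y. ennreal (g y) \<partial>\<mu>)"
    using im nn by (simp add: nn_integral_eq_integral)
  also have "\<dots> = (\<integral>\<^sup>+ t. indicator {0..B} t * emeasure \<mu> {y \<in> space \<mu>. t < g y} \<partial>lborel)"
    by (rule layer_cake_bdd[OF pm gm nn bd])
  also have "\<dots> \<le> (\<integral>\<^sup>+ t. ennreal c * (indicator {0..B} t * emeasure \<nu> {y \<in> space \<nu>. t < g y}) 
                        + ennreal \<delta> * indicator {0..B} t \<partial>lborel)"
  proof (rule nn_integral_mono)
    fix t
    show "indicator {0..B} t * emeasure \<mu> {y \<in> space \<mu>. t < g y} \<le>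
          ennreal c * (indicator {0..B} t * emeasure \<nu> {y \<in> space \<nu>. t < g y}) + ennreal \<delta> * indicator {0..B} t"
      using ineq[of t] by (cases "t \<in> {0..B}") simp_all
  qed
  also have "\<dots> = ennreal c * (\<integral>\<^sup>+ t. indicator {0..B} t * emeasure \<nu> {y \<in> space \<nu>. t < g y} \<partial>lborel)
                  + ennreal \<delta> * (\<integral>\<^sup>+ t. indicator {0..B} t \<partial>lborel)"
    using emeas_meas[OF pn gn] by (subst nn_integral_add) (auto simp: nn_integral_cmult)
  also have "\<dots> = ennreal c * ennreal (integral\<^sup>L \<nu> g) + ennreal \<delta> * ennreal B"
    using layer_cake_bdd[OF pn gn nn bd] inu nn B by (simp add: nn_integral_eq_integral)
  also have "\<dots> = ennreal (c * integral\<^sup>L \<nu> g + \<delta> * B)"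
    using c \<delta> B nn by (simp add: ennreal_plus ennreal_mult integral_nonneg_AE)
  finally show ?thesis
    using c \<delta> B nn by (subst (asm) ennreal_le_iff) (auto intro!: add_nonneg_nonneg mult_nonneg_nonneg integral_nonneg_AE)
qed

lemma dp_two_sided:
  fixes h :: "'a \<Rightarrow> real"
  assumes pm: "prob_space \<mu>" and pn: "prob_space \<nu>" and sm: "sets \<mu> = sets S" and sn: "sets \<nu> = sets S"
    and dp1: "\<And>R. R \<in> sets S \<Longrightarrow> measure \<mu> R \<le> exp 1 * measure \<nu> R + \<delta>"
    and dp2: "\<And>R. R \<in> sets S \<Longrightarrow> measure \<nu> R \<le> exp 1 * measure \<mu> R + \<delta>"
    and \<delta>: "0 \<le> \<delta>"
    and h: "h \<in> borel_measurable S" and bd: "\<And>y. \<bar>h y\<bar> \<le> B"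
  shows "integral\<^sup>L \<mu> h \<le> integral\<^sup>L \<nu> h + (exp 1 - 1) * integral\<^sup>L \<nu> (\<lambda>y. \<bar>h y\<bar>) + 2 * \<delta> * B"
proof -
  interpret m: prob_space \<mu> by fact
  interpret n: prob_space \<nu> by fact
  define hp where "hp = (\<lambda>y. max 0 (h y))"
  define hn where "hn = (\<lambda>y. max 0 (- h y))"
  have hpm: "hp \<in> borel_measurable S" "hn \<in> borel_measurable S" unfolding hp_def hn_def using h by auto
  have B0: "0 \<le> B" by (rule order_trans[OF abs_ge_zero bd])
  have bp: "\<And>y. 0 \<le> hp y" "\<And>y. hp y \<le> B" "\<And>y. 0 \<le> hn y" "\<And>y. hn y \<le> B"
    using bd B0 unfolding hp_def hn_def by (auto simp: abs_le_iff)
  have hmu: "h \<in> borel_measurable \<mu>" "hp \<in> borel_measurable \<mu>" "hn \<in> borel_measurable \<mu>"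
    using h hpm by (simp_all only: measurable_cong_sets[OF sm refl])
  have hnu: "h \<in> borel_measurable \<nu>" "hp \<in> borel_measurable \<nu>" "hn \<in> borel_measurable \<nu>"
    using h hpm by (simp_all only: measurable_cong_sets[OF sn refl])
  have ip: "integrable \<mu> hp" "integrable \<mu> hn" "integrable \<nu> hp" "integrable \<nu> hn"
    using hmu hnu bp
    by (auto intro!: m.integrable_const_bound[where B=B] n.integrable_const_bound[where B=B])
  have e1: "\<And>y. h y = hp y - hn y" "\<And>y. \<bar>h y\<bar> = hp y + hn y" unfolding hp_def hn_def by auto
  have A: "integral\<^sup>L \<mu> hp \<le> exp 1 * integral\<^sup>L \<nu> hp + \<delta> * B"
    by (rule dp_fun[OF pm pn sm sn dp1 _ \<delta> hpm(1) bp(1,2)]) (auto intro: exp_ge_zero)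
  have Bn: "integral\<^sup>L \<nu> hn \<le> exp 1 * integral\<^sup>L \<mu> hn + \<delta> * B"
    by (rule dp_fun[OF pn pm sn sm dp2 _ \<delta> hpm(2) bp(3,4)]) (auto intro: exp_ge_zero)
  have mu_h: "integral\<^sup>L \<mu> h = integral\<^sup>L \<mu> hp - integral\<^sup>L \<mu> hn"
    unfolding e1(1) using ip by (intro Bochner_Integration.integral_diff)
  have nu_h: "integral\<^sup>L \<nu> h = integral\<^sup>L \<nu> hp - integral\<^sup>L \<nu> hn"
    unfolding e1(1) using ip by (intro Bochner_Integration.integral_diff)
  have nu_a: "integral\<^sup>L \<nu> (\<lambda>y. \<bar>h y\<bar>) = integral\<^sup>L \<nu> hp + integral\<^sup>L \<nu> hn"
    unfolding e1(2) using ip by (intro Bochner_Integration.integral_add)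
  have pos: "0 \<le> integral\<^sup>L \<nu> hn" "0 \<le> integral\<^sup>L \<nu> hp" using bp by (auto intro: integral_nonneg_AE)
  have ee: "exp 1 + exp (-1) \<ge> (2::real)"
  proof -
    have "exp 1 \<ge> (2::real)" using exp_ge_add_one_self[of 1] by simp
    moreover have "exp (-1) > (0::real)" by simp
    ultimately show ?thesis by linarith
  qed
  have iB: "integral\<^sup>L \<mu> hn \<ge> exp (-1) * (integral\<^sup>L \<nu> hn - \<delta> * B)"
  proof -
    have "exp (-1) * (integral\<^sup>L \<nu> hn - \<delta> * B) \<le> exp (-1) * (exp 1 * integral\<^sup>L \<mu> hn)"
      using Bn by (intro mult_left_mono) auto
    also have "\<dots> = integral\<^sup>L \<mu> hn" by (simp add: exp_minus field_simps)
    finally show ?thesis .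
  qed
  have "exp (-1) * \<delta> * B \<le> \<delta> * B"
  proof -
    have "exp (-1) \<le> (1::real)" by simp
    moreover have "0 \<le> \<delta> * B" using \<delta> B0 by simp
    ultimately have "exp (-1) * (\<delta> * B) \<le> 1 * (\<delta> * B)" by (rule mult_right_mono)
    then show ?thesis by (simp add: mult.assoc)
  qed
  note dd = this
  have ee2: "exp (-1) * integral\<^sup>L \<nu> hn \<ge> (1 - (exp 1 - 1)) * integral\<^sup>L \<nu> hn"
    using ee pos by (intro mult_right_mono) auto
  have x1: "(1 - (exp 1 - 1)) * integral\<^sup>L \<nu> hn = 2 * integral\<^sup>L \<nu> hn - exp 1 * integral\<^sup>L \<nu> hn"
    by (simp add: algebra_simps)
  have x2: "exp (-1) * (integral\<^sup>L \<nu> hn - \<delta> * B) = exp (-1) * integral\<^sup>L \<nu> hn - exp (-1) * \<delta> * B"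
    by (simp add: algebra_simps)
  have x3: "(exp 1 - 1) * (integral\<^sup>L \<nu> hp + integral\<^sup>L \<nu> hn) =
     exp 1 * integral\<^sup>L \<nu> hp + exp 1 * integral\<^sup>L \<nu> hn - integral\<^sup>L \<nu> hp - integral\<^sup>L \<nu> hn"
    by (simp add: algebra_simps)
  show ?thesis
    unfolding mu_h nu_h nu_a x3 using A iB dd ee2 x1 x2 by linarith
qed

definition clip :: "real \<Rightarrow> real" where "clip t = max 0 (min 1 t)"

lemma clip_bd: "0 \<le> clip t" "clip t \<le> 1" unfolding clip_def by auto

lemma clip_sq: "0 \<le> s \<Longrightarrow> s \<le> 1 \<Longrightarrow> (clip t - s)\<^sup>2 \<le> (t - s)\<^sup>2"
proof -
  assume "0 \<le> s" "s \<le> 1"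
  then have "\<bar>clip t - s\<bar> \<le> \<bar>t - s\<bar>" unfolding clip_def by auto
  then show ?thesis by (simp add: abs_le_square_iff)
qed
    
lemma clip_abs: "0 \<le> s \<Longrightarrow> s \<le> 1 \<Longrightarrow> \<bar>clip t - s\<bar> \<le> 1"
  using clip_bd[of t] by auto

lemma meas_clip[measurable]: "clip \<in> borel_measurable borel"
  unfolding clip_def by measurable

lemma abs_sum_bound:
  fixes f :: "'a \<Rightarrow> real"
  assumes "\<And>x. x \<in> A \<Longrightarrow> \<bar>f x\<bar> \<le> K"
  shows "\<bar>\<Sum>x\<in>A. f x\<bar> \<le> real (card A) * K"
proof -
  have "\<bar>\<Sum>x\<in>A. f x\<bar> \<le> (\<Sum>x\<in>A. \<bar>f x\<bar>)" by (rule sum_abs)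
  also have "\<dots> \<le> (\<Sum>x\<in>A. K)" using assms by (rule sum_mono)
  finally show ?thesis by simp
qed

locale mech =
  fixes n d :: nat and M :: "(nat \<Rightarrow> nat \<Rightarrow> bool) \<Rightarrow> (nat \<Rightarrow> real) measure"
  assumes mech: "mechanism n d M"
begin

definition mm where "mm x j = (\<integral>y. clip (y j) \<partial>M x)"
definition ss where "ss x j = (\<integral>y. (clip (y j))\<^sup>2 \<partial>M x)"
definition err where "err x p = (\<integral>y. (\<Sum>j<d. (clip (y j) - p j)\<^sup>2) \<partial>M x)"

lemma Mprob: "x \<in> datasets n d \<Longrightarrow> prob_space (M x)"
  using mech unfolding mechanism_def by auto

lemma Msets: "x \<in> datasets n d \<Longrightarrow> sets (M x) = sets (out_space d)"
  using mech unfolding mechanism_def by auto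

lemma coord_meas: "j < d \<Longrightarrow> (\<lambda>y. y j) \<in> borel_measurable (out_space d)"
  unfolding out_space_def by (rule measurable_component_singleton) simp

lemma coord_measM: "x \<in> datasets n d \<Longrightarrow> j < d \<Longrightarrow> (\<lambda>y. y j) \<in> borel_measurable (M x)"
  using coord_meas by (subst measurable_cong_sets[OF Msets refl])

lemma intM:
  assumes x: "x \<in> datasets n d" and f: "f \<in> borel_measurable (M x)" and b: "\<And>y. \<bar>f y\<bar> \<le> (K::real)"
  shows "integrable (M x) f"
proof -
  interpret prob_space "M x" using Mprob[OF x] .
  show ?thesis using f b by (intro integrable_const_bound[where B=K]) auto
qed

lemma int_bounds:
  fixes f :: "_ \<Rightarrow> real"
  assumes x: "x \<in> datasets n d" and f: "f \<in> borel_measurable (M x)" and b: "\<And>y. a \<le> f y" "\<And>y. f y \<le> b"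
  shows "a \<le> integral\<^sup>L (M x) f" "integral\<^sup>L (M x) f \<le> b"
proof -
  interpret prob_space "M x" using Mprob[OF x] .
  have i: "integrable (M x) f" using b by (intro intM[OF x f, where K="\<bar>a\<bar> + \<bar>b\<bar>"]) (smt (verit))
  have "integral\<^sup>L (M x) (\<lambda>_. a) \<le> integral\<^sup>L (M x) f" using b i by (intro integral_mono) auto
  then show "a \<le> integral\<^sup>L (M x) f" by (simp add: prob_space)
  have "integral\<^sup>L (M x) f \<le> integral\<^sup>L (M x) (\<lambda>_. b)" using b i by (intro integral_mono) auto
  then show "integral\<^sup>L (M x) f \<le> b" by (simp add: prob_space)
qed

lemma clipj_meas: "x \<in> datasets n d \<Longrightarrow> j < d \<Longrightarrow> (\<lambda>y. clip (y j)) \<in> borel_measurable (M x)"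
  using coord_measM by measurable

lemma mm_bd: "x \<in> datasets n d \<Longrightarrow> j < d \<Longrightarrow> 0 \<le> mm x j \<and> mm x j \<le> 1"
  unfolding mm_def using int_bounds[OF _ clipj_meas, of x j 0 1] clip_bd by auto

lemma ss_bd: "x \<in> datasets n d \<Longrightarrow> j < d \<Longrightarrow> 0 \<le> ss x j \<and> ss x j \<le> 1"
  unfolding ss_def using int_bounds[of x "\<lambda>y. (clip (y j))\<^sup>2" 0 1] clipj_meas[of x j] clip_bd
  by (auto intro!: power_le_one)

lemma int_clip: "x \<in> datasets n d \<Longrightarrow> j < d \<Longrightarrow> integrable (M x) (\<lambda>y. clip (y j))"
  using clip_bd by (intro intM[OF _ clipj_meas, where K=1]) auto

lemma int_clip2: "x \<in> datasets n d \<Longrightarrow> j < d \<Longrightarrow> integrable (M x) (\<lambda>y. (clip (y j))\<^sup>2)"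
  using clip_bd clipj_meas[of x j] by (intro intM[where K=1]) (auto intro!: power_le_one)

lemma err_expand:
  assumes x: "x \<in> datasets n d"
  shows "err x p = (\<Sum>j<d. ss x j - 2 * p j * mm x j + (p j)\<^sup>2)"
proof -
  interpret prob_space "M x" using Mprob[OF x] .
  have "err x p = (\<integral>y. (\<Sum>j<d. (clip (y j))\<^sup>2 - 2 * p j * clip (y j) + (p j)\<^sup>2) \<partial>M x)"
    unfolding err_def by (intro Bochner_Integration.integral_cong refl sum.cong) (simp add: power2_diff algebra_simps)
  also have "\<dots> = (\<Sum>j<d. \<integral>y. (clip (y j))\<^sup>2 - 2 * p j * clip (y j) + (p j)\<^sup>2 \<partial>M x)"
    by (rule Bochner_Integration.integral_sum)
       (auto intro!: Bochner_Integration.integrable_add Bochner_Integration.integrable_diff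
         integrable_mult_right int_clip int_clip2 x)
  also have "\<dots> = (\<Sum>j<d. ss x j - 2 * p j * mm x j + (p j)\<^sup>2)"
  proof (intro sum.cong refl)
    fix j assume "j \<in> {..<d}"
    then have j: "j < d" by simp
    show "(\<integral>y. (clip (y j))\<^sup>2 - 2 * p j * clip (y j) + (p j)\<^sup>2 \<partial>M x) = ss x j - 2 * p j * mm x j + (p j)\<^sup>2"
      using int_clip[OF x j] int_clip2[OF x j]
      by (simp add: ss_def mm_def prob_space Bochner_Integration.integral_add Bochner_Integration.integral_diff
          Bochner_Integration.integrable_diff)
  qed
  finally show ?thesis .
qed

end

context mech begin

definition hf where "hf p b y = (\<Sum>j<d. (clip (y j) - p j) * (bv (b j) - p j))"
definition Bb where "Bb p b = (\<Sum>j<d. \<bar>bv (b j) - p j\<bar>)"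

lemma hf_meas: "hf p b \<in> borel_measurable (out_space d)"
  unfolding hf_def using coord_meas by measurable

lemma hf_measM: "x \<in> datasets n d \<Longrightarrow> hf p b \<in> borel_measurable (M x)"
  using hf_meas by (subst measurable_cong_sets[OF Msets refl])

lemma hf_bd:
  assumes cube: "\<And>j. j < d \<Longrightarrow> 0 \<le> p j \<and> p j \<le> 1"
  shows "\<bar>hf p b y\<bar> \<le> Bb p b"
proof -
  have "\<bar>hf p b y\<bar> \<le> (\<Sum>j<d. \<bar>(clip (y j) - p j) * (bv (b j) - p j)\<bar>)"
    unfolding hf_def by (rule sum_abs)
  also have "\<dots> \<le> Bb p b" unfolding Bb_def abs_mult
  proof (rule sum_mono)
    fix j assume "j \<in> {..<d}"
    then have "\<bar>clip (y j) - p j\<bar> \<le> 1" using cube clip_abs by auto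
    then show "\<bar>clip (y j) - p j\<bar> * \<bar>bv (b j) - p j\<bar> \<le> \<bar>bv (b j) - p j\<bar>"
      by (simp add: mult_left_le_one_le)
  qed
  finally show ?thesis .
qed

lemma hf_int:
  assumes x: "x \<in> datasets n d"
  shows "integral\<^sup>L (M x) (hf p b) = (\<Sum>j<d. (mm x j - p j) * (bv (b j) - p j))"
proof -
  interpret prob_space "M x" using Mprob[OF x] .
  have "integral\<^sup>L (M x) (hf p b) = (\<Sum>j<d. \<integral>y. (clip (y j) - p j) * (bv (b j) - p j) \<partial>M x)"
    unfolding hf_def
    by (rule Bochner_Integration.integral_sum)
       (auto intro!: integrable_mult_left Bochner_Integration.integrable_diff int_clip x)
  also have "\<dots> = (\<Sum>j<d. (mm x j - p j) * (bv (b j) - p j))"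
    using int_clip[OF x] by (intro sum.cong refl) (simp add: mm_def prob_space)
  finally show ?thesis .
qed

lemma abs_amgm:
  fixes h c :: real assumes "0 < c"
  shows "\<bar>h\<bar> \<le> h\<^sup>2 / (2 * c) + c / 2"
proof -
  have "0 \<le> (\<bar>h\<bar> - c)\<^sup>2" by simp
  then have "2 * c * \<bar>h\<bar> \<le> h\<^sup>2 + c\<^sup>2" by (simp add: power2_eq_square algebra_simps)
  then show ?thesis using assms by (simp add: field_simps power2_eq_square)
qed

lemma rows_abs_bound:
  assumes cube: "\<And>j. j < d \<Longrightarrow> 0 \<le> p j \<and> p j \<le> 1" and c: "0 < c"
  shows "(\<Sum>r\<in>drows d. rho d p r * \<bar>hf p r y\<bar>) \<le> (\<Sum>j<d. (clip (y j) - p j)\<^sup>2) / (8 * c) + c / 2"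
proof -
  have "(\<Sum>r\<in>drows d. rho d p r * \<bar>hf p r y\<bar>) \<le> (\<Sum>r\<in>drows d. rho d p r * ((hf p r y)\<^sup>2 / (2 * c) + c / 2))"
    using rho_nonneg[OF cube] abs_amgm[OF c] by (intro sum_mono mult_left_mono) auto
  also have "\<dots> = (\<Sum>r\<in>drows d. rho d p r * (hf p r y)\<^sup>2 / (2 * c) + rho d p r * (c / 2))"
    by (intro sum.cong refl) (simp add: distrib_left)
  also have "\<dots> = (\<Sum>r\<in>drows d. rho d p r * (hf p r y)\<^sup>2) / (2 * c) + (\<Sum>r\<in>drows d. rho d p r) * (c / 2)"
    by (simp only: sum.distrib sum_divide_distrib sum_distrib_right)
  also have "\<dots> = (\<Sum>r\<in>drows d. rho d p r * (hf p r y)\<^sup>2) / (2 * c) + c / 2"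
    by (simp only: rho_sum1 mult_1)
  also have "(\<Sum>r\<in>drows d. rho d p r * (hf p r y)\<^sup>2) = (\<Sum>j<d. (clip (y j) - p j)\<^sup>2 * (p j * (1 - p j)))"
    unfolding hf_def by (rule rho_quad)
  also have "\<dots> \<le> (\<Sum>j<d. (clip (y j) - p j)\<^sup>2 * (1/4))"
  proof (rule sum_mono)
    fix j assume "j \<in> {..<d}"
    have "0 \<le> (2 * p j - 1)\<^sup>2" by simp
    moreover have "p j * (1 - p j) = 1/4 - (2 * p j - 1)\<^sup>2 / 4" by (simp add: power2_eq_square field_simps)
    ultimately have "p j * (1 - p j) \<le> 1/4" by linarith
    then show "(clip (y j) - p j)\<^sup>2 * (p j * (1 - p j)) \<le> (clip (y j) - p j)\<^sup>2 * (1/4)"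
      by (intro mult_left_mono) auto
  qed
  finally have "(\<Sum>r\<in>drows d. rho d p r * \<bar>hf p r y\<bar>) \<le> (\<Sum>j<d. (clip (y j) - p j)\<^sup>2 * (1/4)) / (2 * c) + c / 2"
    using c by (simp add: divide_right_mono)
  also have "(\<Sum>j<d. (clip (y j) - p j)\<^sup>2 * (1/4)) / (2 * c) = (\<Sum>j<d. (clip (y j) - p j)\<^sup>2) / (8 * c)"
    by (simp add: sum_divide_distrib[symmetric])
  finally show ?thesis .
qed

end

context mech begin

lemma sqsum_bd:
  assumes cube: "\<And>j. j < d \<Longrightarrow> 0 \<le> p j \<and> p j \<le> 1"
  shows "\<bar>\<Sum>j<d. (clip (y j) - p j)\<^sup>2\<bar> \<le> real d"
proof -
  have "\<bar>\<Sum>j<d. (clip (y j) - p j)\<^sup>2\<bar> \<le> real (card {..<d}) * 1"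
  proof (rule abs_sum_bound)
    fix j assume "j \<in> {..<d}"
    then have "\<bar>clip (y j) - p j\<bar> \<le> 1" using cube clip_abs by auto
    then have "\<bar>clip (y j) - p j\<bar>^2 \<le> 1" by (intro power_le_one) auto
    then show "\<bar>(clip (y j) - p j)\<^sup>2\<bar> \<le> 1" by simp
  qed
  then show ?thesis by simp
qed

lemma sqsum_meas: "x \<in> datasets n d \<Longrightarrow> (\<lambda>y. \<Sum>j<d. (clip (y j) - p j)\<^sup>2) \<in> borel_measurable (M x)"
  using coord_measM by measurable

lemma err_bd:
  assumes x: "x \<in> datasets n d" and cube: "\<And>j. j < d \<Longrightarrow> 0 \<le> p j \<and> p j \<le> 1"
  shows "0 \<le> err x p" "err x p \<le> real d"
proof -
  have b1: "\<And>y. 0 \<le> (\<Sum>j<d. (clip (y j) - p j)\<^sup>2)" by (simp add: sum_nonneg)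
  have b2: "\<And>y. (\<Sum>j<d. (clip (y j) - p j)\<^sup>2) \<le> real d"
    using sqsum_bd[where p=p, OF cube] by (simp add: abs_le_iff)
  show "0 \<le> err x p" "err x p \<le> real d"
    unfolding err_def using int_bounds[OF x sqsum_meas[OF x, of p] b1 b2] by auto
qed

lemma abs_int_bound:
  assumes x: "x \<in> datasets n d" and cube: "\<And>j. j < d \<Longrightarrow> 0 \<le> p j \<and> p j \<le> 1" and c: "0 < c"
  shows "(\<Sum>r\<in>drows d. rho d p r * (\<integral>y. \<bar>hf p r y\<bar> \<partial>M x)) \<le> err x p / (8 * c) + c / 2"
proof -
  interpret prob_space "M x" using Mprob[OF x] .
  have ih: "integrable (M x) (\<lambda>y. \<bar>hf p r y\<bar>)" for r
    using hf_bd[where p=p, OF cube] hf_measM[OF x] by (intro intM[OF x, where K="Bb p r"]) auto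
  have isq: "integrable (M x) (\<lambda>y. \<Sum>j<d. (clip (y j) - p j)\<^sup>2)"
    using sqsum_bd[where p=p, OF cube] by (intro intM[OF x sqsum_meas[OF x], where K="real d"])
  have "(\<Sum>r\<in>drows d. rho d p r * (\<integral>y. \<bar>hf p r y\<bar> \<partial>M x)) = (\<integral>y. (\<Sum>r\<in>drows d. rho d p r * \<bar>hf p r y\<bar>) \<partial>M x)"
    using ih by (subst Bochner_Integration.integral_sum) (auto intro: integrable_mult_right)
  also have "\<dots> \<le> (\<integral>y. (\<Sum>j<d. (clip (y j) - p j)\<^sup>2) / (8 * c) + c / 2 \<partial>M x)"
  proof (rule integral_mono)
    show "integrable (M x) (\<lambda>y. \<Sum>r\<in>drows d. rho d p r * \<bar>hf p r y\<bar>)"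
      using ih by (intro Bochner_Integration.integrable_sum integrable_mult_right) auto
    show "integrable (M x) (\<lambda>y. (\<Sum>j<d. (clip (y j) - p j)\<^sup>2) / (8 * c) + c / 2)"
      using isq by (intro Bochner_Integration.integrable_add integrable_divide) auto
    show "\<And>y. y \<in> space (M x) \<Longrightarrow> (\<Sum>r\<in>drows d. rho d p r * \<bar>hf p r y\<bar>)
           \<le> (\<Sum>j<d. (clip (y j) - p j)\<^sup>2) / (8 * c) + c / 2"
      using rows_abs_bound[where p=p, OF cube c] by blast
  qed
  also have "\<dots> = err x p / (8 * c) + c / 2"
    using isq unfolding err_def by (simp add: prob_space)
  finally show ?thesis .
qed

end

context mech begin

lemma rho_hf_zero:
  assumes x: "x \<in> datasets n d"
  shows "(\<Sum>r\<in>drows d. rho d p r * integral\<^sup>L (M x) (hf p r)) = 0"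
proof -
  have "(\<Sum>r\<in>drows d. rho d p r * integral\<^sup>L (M x) (hf p r)) = 
        (\<Sum>r\<in>drows d. \<Sum>j<d. (mm x j - p j) * (rho d p r * (bv (r j) - p j)))"
    by (simp add: hf_int[OF x] sum_distrib_left algebra_simps)
  also have "\<dots> = (\<Sum>j<d. (mm x j - p j) * (\<Sum>r\<in>drows d. rho d p r * (bv (r j) - p j)))"
    by (subst sum.swap) (simp add: sum_distrib_left)
  also have "\<dots> = 0" by (simp add: rho_centered)
  finally show ?thesis .
qed

lemma rho_Bb:
  assumes cube: "\<And>j. j < d \<Longrightarrow> 0 \<le> p j \<and> p j \<le> 1"
  shows "(\<Sum>r\<in>drows d. rho d p r * Bb p r) \<le> real d / 2"
proof -
  have "(\<Sum>r\<in>drows d. rho d p r * Bb p r) = (\<Sum>j<d. \<Sum>r\<in>drows d. rho d p r * \<bar>bv (r j) - p j\<bar>)"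
    unfolding Bb_def by (subst sum.swap) (simp add: sum_distrib_left)
  also have "\<dots> = (\<Sum>j<d. 2 * p j * (1 - p j))"
    using cube by (intro sum.cong refl rho_abs) auto
  also have "\<dots> \<le> (\<Sum>j<d. 1/2)"
  proof (rule sum_mono)
    fix j
    have "0 \<le> (2 * p j - 1)\<^sup>2" by simp
    moreover have "2 * p j * (1 - p j) = 1/2 - (2 * p j - 1)\<^sup>2 / 2" by (simp add: power2_eq_square field_simps)
    ultimately show "2 * p j * (1 - p j) \<le> 1/2" by linarith
  qed
  finally show ?thesis by simp
qed

lemma G_bound:
  assumes dp: "diff_private n d 1 \<delta> M" and \<delta>: "0 \<le> \<delta>" and i: "i < n"
    and cube: "\<And>j. j < d \<Longrightarrow> 0 \<le> p j \<and> p j \<le> 1" and c: "0 < c"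
  shows "(\<Sum>x\<in>datasets n d. data_prob n d p x * (\<Sum>j<d. (mm x j - p j) * (bv (x i j) - p j)))
         \<le> (exp 1 - 1) * ((\<Sum>x\<in>datasets n d. data_prob n d p x * err x p) / (8 * c) + c / 2) + \<delta> * real d"
proof -
  let ?D = "datasets n d"
  let ?w = "\<lambda>x. data_prob n d p x"
  define K where "K = (\<lambda>b z. integral\<^sup>L (M z) (hf p b) + (exp 1 - 1) * (\<integral>y. \<bar>hf p b y\<bar> \<partial>M z) + 2 * \<delta> * Bb p b)"
  have wn: "0 \<le> ?w x" for x using data_prob_nonneg[where p=p, OF cube] .
  have rn: "0 \<le> rho d p r" for r using rho_nonneg[where p=p, OF cube] .
  have e1: "0 \<le> exp 1 - (1::real)" using exp_ge_add_one_self[of 1] by simp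
  have xi: "x i \<in> drows d" if "x \<in> ?D" for x using that i unfolding datasets_rows by auto
  have K1: "integral\<^sup>L (M x) (hf p (x i)) \<le> K (x i) (x(i := r))" if x: "x \<in> ?D" and r: "r \<in> drows d" for x r
  proof -
    have x': "x(i := r) \<in> ?D" by (rule upd_in[OF x i r])
    have dp1: "measure (M x) R \<le> exp 1 * measure (M (x(i := r))) R + \<delta>" if "R \<in> sets (out_space d)" for R
      using dp x x' neighbors_upd(1)[OF i, of x r] that unfolding diff_private_def by blast
    have dp2: "measure (M (x(i := r))) R \<le> exp 1 * measure (M x) R + \<delta>" if "R \<in> sets (out_space d)" for R
      using dp x x' neighbors_upd(2)[OF i, of x r] that unfolding diff_private_def by blast
    show ?thesis unfolding K_def
      by (rule dp_two_sided[OF Mprob[OF x] Mprob[OF x'] Msets[OF x] Msets[OF x'] dp1 dp2 \<delta> hf_meas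
            hf_bd[where p=p, OF cube]])
  qed
  have "(\<Sum>x\<in>?D. ?w x * (\<Sum>j<d. (mm x j - p j) * (bv (x i j) - p j))) =
        (\<Sum>x\<in>?D. \<Sum>r\<in>drows d. ?w x * rho d p r * integral\<^sup>L (M x) (hf p (x i)))"
  proof (intro sum.cong refl)
    fix x assume x: "x \<in> ?D"
    have "(\<Sum>r\<in>drows d. ?w x * rho d p r * integral\<^sup>L (M x) (hf p (x i))) =
          ?w x * integral\<^sup>L (M x) (hf p (x i)) * (\<Sum>r\<in>drows d. rho d p r)"
      by (simp add: sum_distrib_left sum_distrib_right algebra_simps)
    then show "?w x * (\<Sum>j<d. (mm x j - p j) * (bv (x i j) - p j)) =
          (\<Sum>r\<in>drows d. ?w x * rho d p r * integral\<^sup>L (M x) (hf p (x i)))"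
      by (simp add: rho_sum1 hf_int[OF x])
  qed
  also have "\<dots> \<le> (\<Sum>x\<in>?D. \<Sum>r\<in>drows d. ?w x * rho d p r * K (x i) (x(i := r)))"
    using K1 wn rn by (intro sum_mono mult_left_mono) auto
  also have "\<dots> = (\<Sum>x\<in>?D. \<Sum>r\<in>drows d. ?w x * rho d p r * K r x)"
    by (rule swap_sum[OF i])
  also have "\<dots> = (\<Sum>x\<in>?D. ?w x * (\<Sum>r\<in>drows d. rho d p r * K r x))"
    by (simp add: sum_distrib_left mult.assoc)
  also have "\<dots> \<le> (\<Sum>x\<in>?D. ?w x * ((exp 1 - 1) * (err x p / (8 * c) + c / 2) + \<delta> * real d))"
  proof (intro sum_mono mult_left_mono wn)
    fix x assume x: "x \<in> ?D"
    have "(\<Sum>r\<in>drows d. rho d p r * K r x) =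
       (\<Sum>r\<in>drows d. rho d p r * integral\<^sup>L (M x) (hf p r)) +
       (exp 1 - 1) * (\<Sum>r\<in>drows d. rho d p r * (\<integral>y. \<bar>hf p r y\<bar> \<partial>M x)) +
       2 * \<delta> * (\<Sum>r\<in>drows d. rho d p r * Bb p r)"
    proof -
      have "(\<Sum>r\<in>drows d. rho d p r * K r x) = (\<Sum>r\<in>drows d. rho d p r * integral\<^sup>L (M x) (hf p r) +
         (exp 1 - 1) * (rho d p r * (\<integral>y. \<bar>hf p r y\<bar> \<partial>M x)) + 2 * \<delta> * (rho d p r * Bb p r))"
        unfolding K_def by (intro sum.cong refl) (simp add: algebra_simps)
      then show ?thesis by (simp only: sum.distrib sum_distrib_left[symmetric])
    qed
    also have "\<dots> \<le> 0 + (exp 1 - 1) * (err x p / (8 * c) + c / 2) + 2 * \<delta> * (real d / 2)"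
      using rho_hf_zero[OF x, of p] abs_int_bound[where p=p, OF x cube c] rho_Bb[where p=p, OF cube] e1 \<delta>
      by (intro add_mono mult_left_mono) auto
    finally show "(\<Sum>r\<in>drows d. rho d p r * K r x) \<le> (exp 1 - 1) * (err x p / (8 * c) + c / 2) + \<delta> * real d"
      by simp
  qed
  also have "\<dots> = (exp 1 - 1) * ((\<Sum>x\<in>?D. ?w x * err x p) / (8 * c)) + 
                  ((exp 1 - 1) * (c / 2) + \<delta> * real d) * (\<Sum>x\<in>?D. ?w x)"
    by (simp add: sum_distrib_left sum_distrib_right sum_divide_distrib sum.distrib algebra_simps)
  also have "\<dots> = (exp 1 - 1) * ((\<Sum>x\<in>?D. ?w x * err x p) / (8 * c) + c / 2) + \<delta> * real d"
    by (simp add: data_sum1 algebra_simps)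
  finally show ?thesis .
qed

end

lemma pm: "j < d \<Longrightarrow> (\<lambda>p. p j) \<in> borel_measurable (prior d)"
proof -
  assume "j < d"
  then have "(\<lambda>p. p j) \<in> measurable (prior d) (uniform_measure lborel {0..1::real})"
    unfolding prior_def by (intro measurable_component_singleton) simp
  then show ?thesis by (metis measurable_cong_sets sets_lborel sets_uniform_measure)
qed

lemma int_prior:
  fixes f :: "(nat \<Rightarrow> real) \<Rightarrow> real"
  assumes f: "f \<in> borel_measurable (prior d)" and b: "\<And>p. (\<And>j. j < d \<Longrightarrow> 0 \<le> p j \<and> p j \<le> 1) \<Longrightarrow> \<bar>f p\<bar> \<le> K"
  shows "integrable (prior d) f"
proof -
  interpret prob_space "prior d" by (rule prior_prob)
  have "AE p in prior d. norm (f p) \<le> K" using prior_AE[of d] by eventually_elim (use b in auto)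
  then show ?thesis using f by (rule integrable_const_bound)
qed

lemma rho_le1: "(\<And>j. j < d \<Longrightarrow> 0 \<le> p j \<and> p j \<le> 1) \<Longrightarrow> rho d p r \<le> 1"
  unfolding rho_def by (intro prod_le_1) auto

lemma dp_le1: "(\<And>j. j < d \<Longrightarrow> 0 \<le> p j \<and> p j \<le> 1) \<Longrightarrow> data_prob n d p x \<le> 1"
  unfolding data_prob_rho by (intro prod_le_1 conjI rho_nonneg rho_le1) auto

lemma abs3: "0 \<le> (a::real) \<Longrightarrow> a \<le> 1 \<Longrightarrow> 0 \<le> b \<Longrightarrow> b \<le> 1 \<Longrightarrow> \<bar>t\<bar> \<le> K \<Longrightarrow> \<bar>a * b * t\<bar> \<le> K"
proof -
  assume h: "0 \<le> a" "a \<le> 1" "0 \<le> b" "b \<le> 1" "\<bar>t\<bar> \<le> K"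
  have "\<bar>a * b * t\<bar> = a * b * \<bar>t\<bar>" using h by (simp add: abs_mult)
  also have "\<dots> \<le> 1 * 1 * K" using h by (intro mult_mono) auto
  finally show ?thesis by simp
qed

lemma cnt_sum: "real (cnt n x j) = (\<Sum>i<n. bv (x i j))"
proof -
  have "(\<Sum>i<n. bv (x i j)) = (\<Sum>i\<in>{i\<in>{..<n}. x i j}. 1)"
    unfolding bv_def by (simp add: sum.inter_filter[symmetric])
  then show ?thesis unfolding cnt_def by simp
qed

context mech begin

definition W where "W p = (\<Sum>x\<in>datasets n d. data_prob n d p x * err x p)"
definition Q where "Q p = (\<Sum>j<d. \<Sum>x\<in>datasets n d. data_prob n d p x * mm x j * (real (cnt n x j) - real n * p j))"
definition Q' where "Q' p = (\<Sum>j<d. \<Sum>x\<in>datasets n d. data_prob n d p x * mm x j * (2 * p j - 1))"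
definition Rr where "Rr p = (\<Sum>j<d. p j * (2 * p j - 1))"

lemmas mintros = borel_measurable_sum borel_measurable_times borel_measurable_prod borel_measurable_diff
   borel_measurable_add measurable_If borel_measurable_const pm borel_measurable_power

lemma W_poly: "W p = (\<Sum>x\<in>datasets n d. data_prob n d p x * (\<Sum>j<d. ss x j - 2 * p j * mm x j + (p j)\<^sup>2))"
  unfolding W_def by (intro sum.cong refl) (simp add: err_expand)

lemma W_meas: "W \<in> borel_measurable (prior d)"
proof -
  have "(\<lambda>p. \<Sum>x\<in>datasets n d. data_prob n d p x * (\<Sum>j<d. ss x j - 2 * p j * mm x j + (p j)\<^sup>2)) \<in> borel_measurable (prior d)"
    unfolding data_prob_def by (intro mintros; simp)
  then show ?thesis by (simp add: W_poly[abs_def])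
qed

lemma Q_meas: "Q \<in> borel_measurable (prior d)"
  unfolding Q_def data_prob_def by (intro mintros; simp)

lemma Q'_meas: "Q' \<in> borel_measurable (prior d)"
  unfolding Q'_def data_prob_def by (intro mintros; simp)

lemma Rr_meas: "Rr \<in> borel_measurable (prior d)"
  unfolding Rr_def by (intro mintros; simp)

lemma W_int: "integrable (prior d) W"
proof (rule int_prior[OF W_meas, where K="real (card (datasets n d)) * real d"])
  fix p :: "nat \<Rightarrow> real" assume cube: "\<And>j. j < d \<Longrightarrow> 0 \<le> p j \<and> p j \<le> 1"
  show "\<bar>W p\<bar> \<le> real (card (datasets n d)) * real d" unfolding W_def
  proof (rule abs_sum_bound)
    fix x assume x: "x \<in> datasets n d"
    show "\<bar>data_prob n d p x * err x p\<bar> \<le> real d"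
      using abs3[of "data_prob n d p x" 1 "err x p" "real d"] data_prob_nonneg[where p=p, OF cube]
        dp_le1[where p=p, OF cube] err_bd[where p=p, OF x cube] by simp
  qed
qed

lemma Q_int: "integrable (prior d) Q"
proof (rule int_prior[OF Q_meas, where K="real d * (real (card (datasets n d)) * real n)"])
  fix p :: "nat \<Rightarrow> real" assume cube: "\<And>j. j < d \<Longrightarrow> 0 \<le> p j \<and> p j \<le> 1"
  show "\<bar>Q p\<bar> \<le> real d * (real (card (datasets n d)) * real n)" unfolding Q_def
  proof (rule order.trans[OF abs_sum_bound[where K="real (card (datasets n d)) * real n"]], simp_all)
    fix j assume j: "j < d"
    show "\<bar>\<Sum>x\<in>datasets n d. data_prob n d p x * mm x j * (real (cnt n x j) - real n * p j)\<bar>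
         \<le> real (card (datasets n d)) * real n"
    proof (rule abs_sum_bound)
      fix x assume x: "x \<in> datasets n d"
      have a1: "real n * p j \<le> real n" using cube[OF j] mult_left_mono[of "p j" 1 "real n"] by simp
      have a2: "0 \<le> real n * p j" using cube[OF j] by simp
      have a3: "real (cnt n x j) \<le> real n" using cnt_le[of n x j] by simp
      have "\<bar>real (cnt n x j) - real n * p j\<bar> \<le> real n"
        using a1 a2 a3 by (simp add: abs_le_iff)
      then show "\<bar>data_prob n d p x * mm x j * (real (cnt n x j) - real n * p j)\<bar> \<le> real n"
        using abs3 data_prob_nonneg[where p=p, OF cube] dp_le1[where p=p, OF cube] mm_bd[OF x j] by blast
    qed
  qed
qed

lemma Q'_int: "integrable (prior d) Q'"
proof (rule int_prior[OF Q'_meas, where K="real d * (real (card (datasets n d)) * 1)"])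
  fix p :: "nat \<Rightarrow> real" assume cube: "\<And>j. j < d \<Longrightarrow> 0 \<le> p j \<and> p j \<le> 1"
  show "\<bar>Q' p\<bar> \<le> real d * (real (card (datasets n d)) * 1)" unfolding Q'_def
  proof (rule order.trans[OF abs_sum_bound[where K="real (card (datasets n d)) * 1"]], simp_all)
    fix j assume j: "j < d"
    have "\<bar>\<Sum>x\<in>datasets n d. data_prob n d p x * mm x j * (2 * p j - 1)\<bar>
         \<le> real (card (datasets n d)) * 1"
    proof (rule abs_sum_bound)
      fix x assume x: "x \<in> datasets n d"
      have "\<bar>2 * p j - 1\<bar> \<le> 1" using cube[OF j] by (simp add: abs_le_iff)
      then show "\<bar>data_prob n d p x * mm x j * (2 * p j - 1)\<bar> \<le> 1"
        using abs3 data_prob_nonneg[where p=p, OF cube] dp_le1[where p=p, OF cube] mm_bd[OF x j] by blast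
    qed
    then show "\<bar>\<Sum>x\<in>datasets n d. data_prob n d p x * mm x j * (2 * p j - 1)\<bar>
         \<le> real (card (datasets n d))" by simp
  qed
qed

lemma Rr_int: "integrable (prior d) Rr"
proof (rule int_prior[OF Rr_meas, where K="real d * 1"])
  fix p :: "nat \<Rightarrow> real" assume cube: "\<And>j. j < d \<Longrightarrow> 0 \<le> p j \<and> p j \<le> 1"
  have "\<bar>Rr p\<bar> \<le> real (card {..<d}) * 1" unfolding Rr_def
  proof (rule abs_sum_bound)
    fix j assume "j \<in> {..<d}"
    then have j: "0 \<le> p j" "p j \<le> 1" using cube by auto
    then have "\<bar>2 * p j - 1\<bar> \<le> 1" by (simp add: abs_le_iff)
    then show "\<bar>p j * (2 * p j - 1)\<bar> \<le> 1" using j by (simp add: abs_mult mult_le_one)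
  qed
  then show "\<bar>Rr p\<bar> \<le> real d * 1" by simp
qed

end

context mech begin

lemma jensen:
  assumes x: "x \<in> datasets n d" and j: "j < d"
  shows "(mm x j)\<^sup>2 \<le> ss x j"
proof -
  interpret prob_space "M x" using Mprob[OF x] .
  have "0 \<le> (\<integral>y. (clip (y j) - mm x j)\<^sup>2 \<partial>M x)" by simp
  also have "(\<integral>y. (clip (y j) - mm x j)\<^sup>2 \<partial>M x) = (\<integral>y. (clip (y j))\<^sup>2 - 2 * mm x j * clip (y j) + (mm x j)\<^sup>2 \<partial>M x)"
    by (intro Bochner_Integration.integral_cong refl) (simp add: power2_diff algebra_simps)
  also have "\<dots> = ss x j - 2 * mm x j * mm x j + (mm x j)\<^sup>2"
    using int_clip[OF x j] int_clip2[OF x j]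
    by (simp add: ss_def mm_def prob_space Bochner_Integration.integral_add Bochner_Integration.integral_diff
          Bochner_Integration.integrable_diff)
  finally show ?thesis by (simp add: power2_eq_square)
qed

lemma fp_term_int:
  assumes x: "x \<in> datasets n d" and j: "j < d"
  shows "integrable (prior d) (\<lambda>p. data_prob n d p x * (real (cnt n x j) + 1 - (real n + 2) * p j))"
proof (rule int_prior[where K="2 * real n + 3"])
  show "(\<lambda>p. data_prob n d p x * (real (cnt n x j) + 1 - (real n + 2) * p j)) \<in> borel_measurable (prior d)"
    unfolding data_prob_def by (intro mintros; simp add: j)
  fix p :: "nat \<Rightarrow> real" assume cube: "\<And>j. j < d \<Longrightarrow> 0 \<le> p j \<and> p j \<le> 1"
  have a1: "(real n + 2) * p j \<le> real n + 2" using cube[OF j] mult_left_mono[of "p j" 1 "real n + 2"] by simp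
  have a2: "0 \<le> (real n + 2) * p j" using cube[OF j] by simp
  have a3: "real (cnt n x j) \<le> real n" using cnt_le[of n x j] by simp
  have "\<bar>real (cnt n x j) + 1 - (real n + 2) * p j\<bar> \<le> 2 * real n + 3"
    unfolding abs_le_iff using a1 a2 a3 by linarith
  then show "\<bar>data_prob n d p x * (real (cnt n x j) + 1 - (real n + 2) * p j)\<bar> \<le> 2 * real n + 3"
    using abs3[of "data_prob n d p x" 1] data_prob_nonneg[where p=p, OF cube] dp_le1[where p=p, OF cube] by simp
qed

lemma QQ': "integral\<^sup>L (prior d) Q = integral\<^sup>L (prior d) Q'"
proof -
  have e: "Q p - Q' p = (\<Sum>j<d. \<Sum>x\<in>datasets n d. mm x j * (data_prob n d p x * (real (cnt n x j) + 1 - (real n + 2) * p j)))" for p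
    unfolding Q_def Q'_def by (simp add: sum_subtractf[symmetric] algebra_simps)
  have "integral\<^sup>L (prior d) Q - integral\<^sup>L (prior d) Q' = integral\<^sup>L (prior d) (\<lambda>p. Q p - Q' p)"
    using Q_int Q'_int by simp
  also have "\<dots> = (\<Sum>j<d. \<Sum>x\<in>datasets n d. mm x j * integral\<^sup>L (prior d) (\<lambda>p. data_prob n d p x * (real (cnt n x j) + 1 - (real n + 2) * p j)))"
    unfolding e using fp_term_int
    by (subst Bochner_Integration.integral_sum, auto intro!: Bochner_Integration.integrable_sum integrable_mult_right
       simp: Bochner_Integration.integral_sum)
  also have "\<dots> = 0" by (simp add: fingerprint_identity)
  finally show ?thesis by simp
qed

definition G where "G i p = (\<Sum>x\<in>datasets n d. data_prob n d p x * (\<Sum>j<d. (mm x j - p j) * (bv (x i j) - p j)))"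

lemma marg_zero:
  assumes j: "j < d"
  shows "(\<Sum>x\<in>datasets n d. data_prob n d p x * (real (cnt n x j) - real n * p j)) = 0"
proof -
  have "(\<Sum>x\<in>datasets n d. data_prob n d p x * (real (cnt n x j) - real n * p j)) =
        (\<Sum>i<n. \<Sum>x\<in>datasets n d. data_prob n d p x * (bv (x i j) - p j))"
  proof -
    have c: "real (cnt n x j) - real n * p j = (\<Sum>i<n. bv (x i j) - p j)" for x
      by (simp add: cnt_sum sum_subtractf)
    show ?thesis unfolding c sum_distrib_left by (rule sum.swap)
  qed
  also have "\<dots> = (\<Sum>i<n. \<Sum>r\<in>drows d. rho d p r * (bv (r j) - p j))"
    by (intro sum.cong refl) (rule data_marg[of _ n d p "\<lambda>r. bv (r j) - p j"], simp)
  also have "\<dots> = 0" using j by (simp add: rho_centered)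
  finally show ?thesis .
qed

lemma swap2: "(\<Sum>i\<in>I. \<Sum>j\<in>J. (a j :: real) * b i j) = (\<Sum>j\<in>J. a j * (\<Sum>i\<in>I. b i j))"
  by (subst sum.swap) (simp add: sum_distrib_left)

lemma Q_G: "Q p = (\<Sum>i<n. G i p)"
proof -
  let ?w = "\<lambda>x. data_prob n d p x"
  have "(\<Sum>i<n. G i p) = (\<Sum>x\<in>datasets n d. \<Sum>i<n. ?w x * (\<Sum>j<d. (mm x j - p j) * (bv (x i j) - p j)))"
    unfolding G_def by (rule sum.swap)
  also have "\<dots> = (\<Sum>x\<in>datasets n d. ?w x * (\<Sum>j<d. (mm x j - p j) * (real (cnt n x j) - real n * p j)))"
  proof (intro sum.cong refl)
    fix x
    have "(\<Sum>i<n. ?w x * (\<Sum>j<d. (mm x j - p j) * (bv (x i j) - p j))) =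
          ?w x * (\<Sum>i<n. \<Sum>j<d. (mm x j - p j) * (bv (x i j) - p j))"
      by (simp add: sum_distrib_left)
    also have "(\<Sum>i<n. \<Sum>j<d. (mm x j - p j) * (bv (x i j) - p j)) = 
               (\<Sum>j<d. (mm x j - p j) * (\<Sum>i<n. bv (x i j) - p j))"
      by (rule swap2)
    also have "\<dots> = (\<Sum>j<d. (mm x j - p j) * (real (cnt n x j) - real n * p j))"
      by (simp add: cnt_sum sum_subtractf)
    finally show "(\<Sum>i<n. ?w x * (\<Sum>j<d. (mm x j - p j) * (bv (x i j) - p j))) =
          ?w x * (\<Sum>j<d. (mm x j - p j) * (real (cnt n x j) - real n * p j))" .
  qed
  also have "\<dots> = (\<Sum>j<d. \<Sum>x\<in>datasets n d. ?w x * ((mm x j - p j) * (real (cnt n x j) - real n * p j)))"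
    by (simp only: sum_distrib_left) (rule sum.swap)
  also have "\<dots> = (\<Sum>j<d. (\<Sum>x\<in>datasets n d. ?w x * mm x j * (real (cnt n x j) - real n * p j))
                    - p j * (\<Sum>x\<in>datasets n d. ?w x * (real (cnt n x j) - real n * p j)))"
  proof (intro sum.cong refl)
    fix j
    have "(\<Sum>x\<in>datasets n d. ?w x * ((mm x j - p j) * (real (cnt n x j) - real n * p j))) =
          (\<Sum>x\<in>datasets n d. ?w x * mm x j * (real (cnt n x j) - real n * p j) - p j * (?w x * (real (cnt n x j) - real n * p j)))"
      by (intro sum.cong refl) (simp add: algebra_simps)
    then show "(\<Sum>x\<in>datasets n d. ?w x * ((mm x j - p j) * (real (cnt n x j) - real n * p j))) =
          (\<Sum>x\<in>datasets n d. ?w x * mm x j * (real (cnt n x j) - real n * p j))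
                    - p j * (\<Sum>x\<in>datasets n d. ?w x * (real (cnt n x j) - real n * p j))"
      by (simp only: sum_subtractf sum_distrib_left)
  qed
  also have "\<dots> = Q p" unfolding Q_def by (simp add: marg_zero)
  finally show ?thesis by simp
qed

lemma Q_upper:
  assumes dp: "diff_private n d 1 \<delta> M" and \<delta>: "0 \<le> \<delta>"
    and cube: "\<And>j. j < d \<Longrightarrow> 0 \<le> p j \<and> p j \<le> 1" and c: "0 < c"
  shows "Q p \<le> real n * ((exp 1 - 1) * (W p / (8 * c) + c / 2) + \<delta> * real d)"
proof -
  have "Q p = (\<Sum>i<n. G i p)" by (rule Q_G)
  also have "\<dots> \<le> (\<Sum>i<n. (exp 1 - 1) * (W p / (8 * c) + c / 2) + \<delta> * real d)"
    unfolding G_def W_def by (intro sum_mono G_bound[where p=p, OF dp \<delta> _ cube c]) simp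
  finally show ?thesis by simp
qed

lemma Q'_lower:
  assumes cube: "\<And>j. j < d \<Longrightarrow> 0 \<le> p j \<and> p j \<le> 1" and a: "0 < \<alpha>"
  shows "Rr p - W p / (2 * \<alpha>) - \<alpha> * real d / 2 \<le> Q' p"
proof -
  let ?w = "\<lambda>x. data_prob n d p x"
  have wn: "\<And>x. 0 \<le> ?w x" using data_prob_nonneg[where p=p, OF cube] .
  have key: "?w x * ((ss x j - 2 * p j * mm x j + (p j)\<^sup>2) / (2 * \<alpha>) + \<alpha> / 2) \<ge> - (?w x * (mm x j * (2 * p j - 1) - p j * (2 * p j - 1)))"
    if x: "x \<in> datasets n d" and j: "j < d" for x j
  proof -
    have "\<bar>(mm x j - p j) * (2 * p j - 1)\<bar> \<le> \<bar>mm x j - p j\<bar>"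
      using cube[OF j] by (simp add: abs_mult mult_left_le abs_le_iff)
    also have "\<dots> \<le> (mm x j - p j)\<^sup>2 / (2 * \<alpha>) + \<alpha> / 2" by (rule abs_amgm[OF a])
    also have "\<dots> \<le> (ss x j - 2 * p j * mm x j + (p j)\<^sup>2) / (2 * \<alpha>) + \<alpha> / 2"
      using jensen[OF x j] a by (intro add_right_mono divide_right_mono) (auto simp: power2_diff)
    finally have "- ((mm x j - p j) * (2 * p j - 1)) \<le> (ss x j - 2 * p j * mm x j + (p j)\<^sup>2) / (2 * \<alpha>) + \<alpha> / 2"
      by (simp add: abs_le_iff)
    then have "?w x * (- ((mm x j - p j) * (2 * p j - 1))) \<le> ?w x * ((ss x j - 2 * p j * mm x j + (p j)\<^sup>2) / (2 * \<alpha>) + \<alpha> / 2)"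
      using wn by (rule mult_left_mono)
    then show ?thesis by (simp add: algebra_simps)
  qed
  have r: "Rr p = (\<Sum>j<d. \<Sum>x\<in>datasets n d. ?w x * (p j * (2 * p j - 1)))"
    unfolding Rr_def by (simp add: sum_distrib_right[symmetric] data_sum1)
  have "Q' p - Rr p = (\<Sum>j<d. \<Sum>x\<in>datasets n d. ?w x * mm x j * (2 * p j - 1) - ?w x * (p j * (2 * p j - 1)))"
    unfolding Q'_def r by (simp only: sum_subtractf)
  also have "\<dots> = (\<Sum>j<d. \<Sum>x\<in>datasets n d. ?w x * (mm x j * (2 * p j - 1) - p j * (2 * p j - 1)))"
    by (intro sum.cong refl) (simp add: algebra_simps)
  finally have "Q' p - Rr p = (\<Sum>j<d. \<Sum>x\<in>datasets n d. ?w x * (mm x j * (2 * p j - 1) - p j * (2 * p j - 1)))" .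
  also have "\<dots> \<ge> (\<Sum>j<d. \<Sum>x\<in>datasets n d. - (?w x * ((ss x j - 2 * p j * mm x j + (p j)\<^sup>2) / (2 * \<alpha>) + \<alpha> / 2)))"
  proof (intro sum_mono)
    fix j x assume "j \<in> {..<d}" "x \<in> datasets n d"
    then show "- (?w x * ((ss x j - 2 * p j * mm x j + (p j)\<^sup>2) / (2 * \<alpha>) + \<alpha> / 2))
              \<le> ?w x * (mm x j * (2 * p j - 1) - p j * (2 * p j - 1))"
      using key[of x j] by simp
  qed
  finally have "Q' p - Rr p \<ge> - (\<Sum>j<d. \<Sum>x\<in>datasets n d. ?w x * ((ss x j - 2 * p j * mm x j + (p j)\<^sup>2) / (2 * \<alpha>) + \<alpha> / 2))"
    by (simp add: sum_negf)
  moreover have "(\<Sum>j<d. \<Sum>x\<in>datasets n d. ?w x * ((ss x j - 2 * p j * mm x j + (p j)\<^sup>2) / (2 * \<alpha>) + \<alpha> / 2))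
      = W p / (2 * \<alpha>) + \<alpha> * real d / 2"
  proof -
    have "(\<Sum>j<d. \<Sum>x\<in>datasets n d. ?w x * ((ss x j - 2 * p j * mm x j + (p j)\<^sup>2) / (2 * \<alpha>) + \<alpha> / 2))
        = (\<Sum>x\<in>datasets n d. ?w x * (\<Sum>j<d. ss x j - 2 * p j * mm x j + (p j)\<^sup>2)) / (2 * \<alpha>) 
          + (\<Sum>x\<in>datasets n d. ?w x) * (\<alpha> * real d / 2)"
      by (subst sum.swap) (simp add: sum_distrib_left sum_distrib_right sum.distrib sum_divide_distrib algebra_simps)
    then show ?thesis by (simp add: W_poly data_sum1)
  qed
  ultimately show ?thesis by linarith
qed

end

lemma final_arith:
  fixes s \<alpha> N E t :: real
  assumes s: "0 < s" and a: "0 < \<alpha>" "\<alpha> \<le> 1/18" and N: "0 \<le> N" and E: "0 \<le> E" "E \<le> 2"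
    and t: "0 \<le> t" "t \<le> 1/10"
    and main: "s\<^sup>2 / 6 - \<alpha> * s\<^sup>2 \<le> N * (E * (\<alpha> * s / 2)) + t * s\<^sup>2"
  shows "s / 5 \<le> N"
proof -
  have s2: "0 < s\<^sup>2" using s by simp
  have h1: "\<alpha> * s\<^sup>2 \<le> s\<^sup>2 / 18" using a s2 by (simp add: mult_right_mono)
  have h2: "t * s\<^sup>2 \<le> s\<^sup>2 / 10" using t s2 by (simp add: mult_right_mono)
  have "N * (E * (\<alpha> * s / 2)) \<le> N * (2 * ((1/18) * s / 2))"
    using N E a s by (intro mult_left_mono mult_mono) auto
  then have h3: "N * (E * (\<alpha> * s / 2)) \<le> N * s / 18" by simp
  have "s\<^sup>2 / 90 \<le> N * s / 18" using main h1 h2 h3 by linarith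
  then have "s * s \<le> s * (5 * N)" by (simp add: power2_eq_square field_simps)
  then show ?thesis using s by simp
qed

context mech begin

lemma accuracy:
  assumes acc: "expected_sq_error n d M \<le> ennreal B" and B: "0 \<le> B"
  shows "integral\<^sup>L (prior d) W \<le> B"
proof -
  have Wn: "AE p in prior d. 0 \<le> W p"
    using prior_AE[of d]
  proof eventually_elim
    case (elim p)
    then have cube: "\<And>j. j < d \<Longrightarrow> 0 \<le> p j \<and> p j \<le> 1" by auto
    show ?case unfolding W_def
      using data_prob_nonneg[where p=p, OF cube] err_bd(1)[where p=p, OF _ cube] by (auto intro!: sum_nonneg)
  qed
  have "ennreal (integral\<^sup>L (prior d) W) = (\<integral>\<^sup>+ p. ennreal (W p) \<partial>prior d)"
    by (rule nn_integral_eq_integral[OF W_int Wn, symmetric])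
  also have "\<dots> \<le> expected_sq_error n d M"
    unfolding expected_sq_error_def
  proof (rule nn_integral_mono_AE)
    show "AE p in prior d. ennreal (W p) \<le> (\<Sum>x\<in>datasets n d. ennreal (data_prob n d p x) *
        (\<integral>\<^sup>+ y. ennreal (\<Sum>j<d. (y j - p j)\<^sup>2) \<partial>M x))"
      using prior_AE[of d]
    proof eventually_elim
      case (elim p)
      then have cube: "\<And>j. j < d \<Longrightarrow> 0 \<le> p j \<and> p j \<le> 1" by auto
      have wn: "\<And>x. 0 \<le> data_prob n d p x" using data_prob_nonneg[where p=p, OF cube] .
      have en: "\<And>x. x \<in> datasets n d \<Longrightarrow> 0 \<le> err x p" using err_bd(1)[where p=p, OF _ cube] .
      have "ennreal (W p) = (\<Sum>x\<in>datasets n d. ennreal (data_prob n d p x * err x p))"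
        unfolding W_def using wn en by (subst sum_ennreal) auto
      also have "\<dots> \<le> (\<Sum>x\<in>datasets n d. ennreal (data_prob n d p x) *
          (\<integral>\<^sup>+ y. ennreal (\<Sum>j<d. (y j - p j)\<^sup>2) \<partial>M x))"
      proof (rule sum_mono)
        fix x assume x: "x \<in> datasets n d"
        interpret prob_space "M x" using Mprob[OF x] .
        have isq: "integrable (M x) (\<lambda>y. \<Sum>j<d. (clip (y j) - p j)\<^sup>2)"
          using sqsum_bd[where p=p, OF cube] by (intro intM[OF x sqsum_meas[OF x], where K="real d"])
        have "ennreal (err x p) = (\<integral>\<^sup>+ y. ennreal (\<Sum>j<d. (clip (y j) - p j)\<^sup>2) \<partial>M x)"
          unfolding err_def by (rule nn_integral_eq_integral[OF isq, symmetric]) (auto intro!: sum_nonneg)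
        also have "\<dots> \<le> (\<integral>\<^sup>+ y. ennreal (\<Sum>j<d. (y j - p j)\<^sup>2) \<partial>M x)"
          by (intro nn_integral_mono ennreal_leI sum_mono clip_sq) (use cube in auto)
        finally have "ennreal (err x p) \<le> (\<integral>\<^sup>+ y. ennreal (\<Sum>j<d. (y j - p j)\<^sup>2) \<partial>M x)" .
        then show "ennreal (data_prob n d p x * err x p) \<le> ennreal (data_prob n d p x) *
          (\<integral>\<^sup>+ y. ennreal (\<Sum>j<d. (y j - p j)\<^sup>2) \<partial>M x)"
          using wn en[OF x] by (simp add: ennreal_mult mult_left_mono)
      qed
      finally show ?case .
    qed
  qed
  also have "\<dots> \<le> ennreal B" by (rule acc)
  finally show ?thesis using B by (simp add: ennreal_le_iff)
qed

lemma Rr_integral: "integral\<^sup>L (prior d) Rr = real d / 6"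
proof -
  have i: "integrable (prior d) (\<lambda>p. p j * (2 * p j - 1))" if j: "j < d" for j
  proof (rule int_prior[where K=1])
    show "(\<lambda>p. p j * (2 * p j - 1)) \<in> borel_measurable (prior d)" by (intro mintros; simp add: j)
    fix p :: "nat \<Rightarrow> real" assume cube: "\<And>j. j < d \<Longrightarrow> 0 \<le> p j \<and> p j \<le> 1"
    then have jj: "0 \<le> p j" "p j \<le> 1" using j by auto
    then have "\<bar>2 * p j - 1\<bar> \<le> 1" by (simp add: abs_le_iff)
    then show "\<bar>p j * (2 * p j - 1)\<bar> \<le> 1" using jj by (simp add: abs_mult mult_le_one)
  qed
  have "integral\<^sup>L (prior d) Rr = (\<Sum>j<d. integral\<^sup>L (prior d) (\<lambda>p. p j * (2 * p j - 1)))"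
    unfolding Rr_def using i by (intro Bochner_Integration.integral_sum) auto
  also have "\<dots> = (\<Sum>j<d. 1/6)" by (intro sum.cong refl) (simp add: prior_coord)
  finally show ?thesis by simp
qed

end

theorem corollaryA1:
  fixes n d :: nat and \<alpha> :: real
    and M :: "(nat \<Rightarrow> nat \<Rightarrow> bool) \<Rightarrow> (nat \<Rightarrow> real) measure"
  assumes "\<alpha> > 0"
    and "mechanism n d M"
    and "diff_private n d 1 (1 / (10 * real n)) M"
    and "expected_sq_error n d M \<le> ennreal (\<alpha>\<^sup>2 * real d)"
    and "\<alpha> \<le> 1/18"
  shows "real n \<ge> sqrt (real d) / 5"
proof (cases "d = 0")
  case True
  then show ?thesis by simp
next
  case False
  note a = assms(1) and dp = assms(3) and acc = assms(4) and a18 = assms(5)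
  interpret mech n d M by unfold_locales (rule assms(2))
  define \<delta> where "\<delta> = 1 / (10 * real n)"
  define s where "s = sqrt (real d)"
  define c where "c = \<alpha> * s / 2"
  have s: "0 < s" using False by (simp add: s_def)
  have ds: "real d = s\<^sup>2" by (simp add: s_def)
  have c: "0 < c" using s a by (simp add: c_def)
  have \<delta>: "0 \<le> \<delta>" by (simp add: \<delta>_def)
  have e1: "0 \<le> exp 1 - (1::real)" using exp_ge_add_one_self[of 1] by simp
  have e2: "exp 1 - 1 \<le> (2::real)" using exp_le by simp
  have t: "real n * \<delta> \<le> 1/10" by (cases "n = 0") (simp_all add: \<delta>_def)
  have t0: "0 \<le> real n * \<delta>" using \<delta> by simp
  have IW: "integral\<^sup>L (prior d) W \<le> \<alpha>\<^sup>2 * real d"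
    by (rule accuracy[OF acc]) simp
  have dp': "diff_private n d 1 \<delta> M" using dp by (simp add: \<delta>_def)
  have lower: "real d / 6 - integral\<^sup>L (prior d) W / (2 * \<alpha>) - \<alpha> * real d / 2 \<le> integral\<^sup>L (prior d) Q'"
  proof -
    have "integral\<^sup>L (prior d) (\<lambda>p. Rr p - W p / (2 * \<alpha>) - \<alpha> * real d / 2) \<le> integral\<^sup>L (prior d) Q'"
    proof (rule integral_mono_AE)
      show "integrable (prior d) (\<lambda>p. Rr p - W p / (2 * \<alpha>) - \<alpha> * real d / 2)"
        using Rr_int W_int prob_space.finite_measure[OF prior_prob]
        by (intro Bochner_Integration.integrable_diff integrable_divide finite_measure.integrable_const) auto
      show "integrable (prior d) Q'" by (rule Q'_int)
      show "AE p in prior d. Rr p - W p / (2 * \<alpha>) - \<alpha> * real d / 2 \<le> Q' p"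
        using prior_AE[of d] by eventually_elim (rule Q'_lower[OF _ a], auto)
    qed
    moreover have "integral\<^sup>L (prior d) (\<lambda>p. Rr p - W p / (2 * \<alpha>) - \<alpha> * real d / 2) =
        real d / 6 - integral\<^sup>L (prior d) W / (2 * \<alpha>) - \<alpha> * real d / 2"
    proof -
      interpret prob_space "prior d" by (rule prior_prob)
      have i1: "integrable (prior d) (\<lambda>p. Rr p - W p / (2 * \<alpha>))"
        using Rr_int W_int by (intro Bochner_Integration.integrable_diff integrable_divide) auto
      have "integral\<^sup>L (prior d) (\<lambda>p. Rr p - W p / (2 * \<alpha>) - \<alpha> * real d / 2) =
            integral\<^sup>L (prior d) (\<lambda>p. Rr p - W p / (2 * \<alpha>)) - \<alpha> * real d / 2"
        using i1 by (subst Bochner_Integration.integral_diff) (auto simp: prob_space)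
      also have "integral\<^sup>L (prior d) (\<lambda>p. Rr p - W p / (2 * \<alpha>)) = integral\<^sup>L (prior d) Rr - integral\<^sup>L (prior d) W / (2 * \<alpha>)"
        using Rr_int W_int by (subst Bochner_Integration.integral_diff) (auto intro: integrable_divide)
      finally show ?thesis by (simp add: Rr_integral)
    qed
    ultimately show ?thesis by simp
  qed
  have upper: "integral\<^sup>L (prior d) Q \<le> real n * ((exp 1 - 1) * (integral\<^sup>L (prior d) W / (8 * c) + c / 2) + \<delta> * real d)"
  proof -
    have "integral\<^sup>L (prior d) Q \<le> integral\<^sup>L (prior d) (\<lambda>p. real n * ((exp 1 - 1) * (W p / (8 * c) + c / 2) + \<delta> * real d))"
    proof (rule integral_mono_AE)
      show "integrable (prior d) Q" by (rule Q_int)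
      show "integrable (prior d) (\<lambda>p. real n * ((exp 1 - 1) * (W p / (8 * c) + c / 2) + \<delta> * real d))"
        using W_int prob_space.finite_measure[OF prior_prob]
        by (intro integrable_mult_right Bochner_Integration.integrable_add integrable_divide finite_measure.integrable_const) auto
      show "AE p in prior d. Q p \<le> real n * ((exp 1 - 1) * (W p / (8 * c) + c / 2) + \<delta> * real d)"
        using prior_AE[of d] by eventually_elim (rule Q_upper[OF dp' \<delta> _ c], auto)
    qed
    moreover have "integral\<^sup>L (prior d) (\<lambda>p. real n * ((exp 1 - 1) * (W p / (8 * c) + c / 2) + \<delta> * real d)) =
       real n * ((exp 1 - 1) * (integral\<^sup>L (prior d) W / (8 * c) + c / 2) + \<delta> * real d)"
    proof -
      interpret prob_space "prior d" by (rule prior_prob)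
      have i1: "integrable (prior d) (\<lambda>p. W p / (8 * c) + c / 2)"
        using W_int by (intro Bochner_Integration.integrable_add integrable_divide) auto
      have i2: "integrable (prior d) (\<lambda>p. (exp 1 - 1) * (W p / (8 * c) + c / 2))"
        using i1 by (intro integrable_mult_right)
      have i3: "integrable (prior d) (\<lambda>p. (exp 1 - 1) * (W p / (8 * c) + c / 2) + \<delta> * real d)"
        using i2 by (intro Bochner_Integration.integrable_add) auto
      have e3: "integral\<^sup>L (prior d) (\<lambda>p. W p / (8 * c) + c / 2) = integral\<^sup>L (prior d) W / (8 * c) + c / 2"
        using W_int by (subst Bochner_Integration.integral_add) (auto intro: integrable_divide simp: prob_space)
      have e2: "integral\<^sup>L (prior d) (\<lambda>p. (exp 1 - 1) * (W p / (8 * c) + c / 2) + \<delta> * real d) =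
                (exp 1 - 1) * (integral\<^sup>L (prior d) W / (8 * c) + c / 2) + \<delta> * real d"
        using i2 i1 by (subst Bochner_Integration.integral_add) (auto simp: prob_space e3)
      show ?thesis using i3 by (simp add: e2)
    qed
    ultimately show ?thesis by (rule ord_le_eq_trans)
  qed
  have lower2: "real d / 6 - \<alpha> * real d \<le> integral\<^sup>L (prior d) Q'"
  proof -
    have "integral\<^sup>L (prior d) W / (2 * \<alpha>) \<le> \<alpha>\<^sup>2 * real d / (2 * \<alpha>)"
      using IW a by (simp add: divide_right_mono)
    also have "\<dots> = \<alpha> * real d / 2" using a by (simp add: power2_eq_square field_simps)
    finally show ?thesis using lower by simp
  qed
  have upper2: "integral\<^sup>L (prior d) Q \<le> real n * ((exp 1 - 1) * (\<alpha> * s / 2)) + real n * \<delta> * s\<^sup>2"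
  proof -
    have "integral\<^sup>L (prior d) W / (8 * c) \<le> \<alpha>\<^sup>2 * real d / (8 * c)"
      using IW c by (simp add: divide_right_mono)
    also have "\<alpha>\<^sup>2 * real d / (8 * c) = \<alpha> * s / 4"
      using s a unfolding ds c_def by (simp add: power2_eq_square field_simps)
    finally have "integral\<^sup>L (prior d) W / (8 * c) \<le> \<alpha> * s / 4" .
    then have "real n * ((exp 1 - 1) * (integral\<^sup>L (prior d) W / (8 * c) + c / 2) + \<delta> * real d) \<le>
               real n * ((exp 1 - 1) * (\<alpha> * s / 4 + c / 2) + \<delta> * real d)"
      using e1 by (intro mult_left_mono add_right_mono) auto
    also have "\<dots> = real n * ((exp 1 - 1) * (\<alpha> * s / 2)) + real n * \<delta> * s\<^sup>2"
      unfolding c_def ds by (simp add: algebra_simps)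
    finally show ?thesis using upper by simp
  qed
  have main: "s\<^sup>2 / 6 - \<alpha> * s\<^sup>2 \<le> real n * ((exp 1 - 1) * (\<alpha> * s / 2)) + (real n * \<delta>) * s\<^sup>2"
    using lower2 upper2 QQ' unfolding ds by simp
  have "s / 5 \<le> real n"
    by (rule final_arith[OF s a a18 _ e1 e2 t0 t main]) simp
  then show ?thesis by (simp add: s_def)
qed

end
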